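(* Let $N\in\mathbb{N}$, $s\in(0,1)$ with $N\geq 2s$, and let $$\mathcal{G}_{s,\infty}(x,y)=\frac{\kappa_{N,s}}{2}|x-y|^{2s-N}\int_0^{\frac{4x_1y_1}{|x-y|^2}}\frac{r^{s-1}}{(r+1)^{N/2}}dr\quad\text{for }x,y\in\mathbb{R}^N_+,$$ and $\mathcal{P}_s(x)=\mathcal{K}_s|x|^{-N}x_1^s$ for $x\in\mathbb{R}^N_+$. Then $\epsilon^{-s}\mathcal{G}_{s,\infty}(\cdot,\epsilon e_1)\to\mathcal{P}_s$ as $\epsilon\to0^+$ in $L^1_s(\mathbb{R}^N_+)$ and uniformly on every compact subset of $\mathbb{R}^N_+$. Moreover, for every $\varphi\in\mathbb{X}_s(\mathbb{R}^N_+)$, $$\lim_{\epsilon\to0^+}\int_{\mathbb{R}^N_+}\epsilon^{-s}\mathcal{G}_{s,\infty}(x,\epsilon e_1)\,(-\Delta)^s\varphi(x)\,dx=\int_{\mathbb{R}^N_+}\mathcal{P}_s(x)\,(-\Delta)^s\varphi(x)\,dx.$$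
   Context: Write $x=(x_1,x')$, $\mathbb{R}^N_+=(0,\infty)\times\mathbb{R}^{N-1}$, $e_1=(1,0,\dots,0)$. Constants: $\kappa_{N,s}=\pi^{-(N/2+1)}\Gamma(N/2)\sin(\pi s)$, $\mathcal{K}_s=\kappa_{N,s}2^{2s-1}s^{-1}$, $c_{N,s}=2^{2s}\pi^{-N/2}s\Gamma(\frac{N+2s}{2})/\Gamma(1-s)$. Convergence in $L^1_s(\mathbb{R}^N_+)$ means convergence in the norm $\int_{\mathbb{R}^N_+}\frac{|f(x)|}{1+|x|^{N+2s}}dx$. For $u:\mathbb{R}^N\to\mathbb{R}$, $(-\Delta)^s_\epsilon u(x)=c_{N,s}\int_{B_{1/\epsilon}\setminus B_\epsilon}\frac{u(x)-u(x+z)}{|z|^{N+2s}}dz$ and $(-\Delta)^s u=\lim_{\epsilon\to0^+}(-\Delta)^s_\epsilon u$. The test space $\mathbb{X}_s(\mathbb{R}^N_+)$ is the set of $\xi\in C(\mathbb{R}^N)$ such that: (i) $\xi$ has compact support contained in $\overline{\mathbb{R}^N_+}$; (ii) $\rho^{-s}\xi$ is continuous in $\overline{\mathbb{R}^N_+}$, where $\rho(x)=(x_1)_+$, and $\|(-\Delta)^s\xi\|_{L^\infty(\mathbb{R}^N_+)}<\infty$; (iii) there exist $\varphi\in L^1(\mathbb{R}^N_+,\rho^s dx)$ and $\epsilon_0>0$ with $|(-\Delta)^s_\epsilon\xi|\le\varphi$ a.e. in $\mathbb{R}^N_+$ for all $\epsilon\in(0,\epsilon_0]$. *)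

theory Defs
  imports "HOL-Analysis.Analysis"
begin

text \<open>Euclidean space R^N is modelled as real^'n with N = CARD('n); the index i1 plays
the role of the first coordinate x_1.\<close>

definition halfsp :: "'n::finite \<Rightarrow> (real^'n) set" where
  "halfsp i1 = {x. x $ i1 > 0}"

definition kappa :: "nat \<Rightarrow> real \<Rightarrow> real" where
  "kappa N s = pi powr (-(real N / 2 + 1)) * Gamma (real N / 2) * sin (pi * s)"

definition Kcal :: "nat \<Rightarrow> real \<Rightarrow> real" where
  "Kcal N s = kappa N s * 2 powr (2 * s - 1) / s"

definition cNs :: "nat \<Rightarrow> real \<Rightarrow> real" where
  "cNs N s = 2 powr (2 * s) * pi powr (- real N / 2) * s * Gamma ((real N + 2 * s) / 2)
             / Gamma (1 - s)"

definition Ginf :: "'n::finite \<Rightarrow> real \<Rightarrow> real^'n \<Rightarrow> real^'n \<Rightarrow> real" where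
  "Ginf i1 s x y = kappa CARD('n) s / 2 * norm (x - y) powr (2 * s - real CARD('n)) *
     (LINT r:{0..4 * (x $ i1) * (y $ i1) / (norm (x - y))\<^sup>2}|lborel.
        r powr (s - 1) / (r + 1) powr (real CARD('n) / 2))"

definition Pcal :: "'n::finite \<Rightarrow> real \<Rightarrow> real^'n \<Rightarrow> real" where
  "Pcal i1 s x = Kcal CARD('n) s * norm x powr (- real CARD('n)) * (x $ i1) powr s"

definition frac_lap_eps :: "real \<Rightarrow> real \<Rightarrow> (real^'n::finite \<Rightarrow> real) \<Rightarrow> real^'n \<Rightarrow> real" where
  "frac_lap_eps s \<epsilon> u x = cNs CARD('n) s *
     (LINT z:(ball 0 (1 / \<epsilon>) - ball 0 \<epsilon>)|lebesgue.
        (u x - u (x + z)) / norm z powr (real CARD('n) + 2 * s))"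

definition frac_lap :: "real \<Rightarrow> (real^'n::finite \<Rightarrow> real) \<Rightarrow> real^'n \<Rightarrow> real" where
  "frac_lap s u x = Lim (at_right 0) (\<lambda>\<epsilon>. frac_lap_eps s \<epsilon> u x)"

definition Xs :: "'n::finite \<Rightarrow> real \<Rightarrow> (real^'n \<Rightarrow> real) set" where
  "Xs i1 s = {\<xi>. continuous_on UNIV \<xi>
     \<and> compact (closure {x. \<xi> x \<noteq> 0}) \<and> closure {x. \<xi> x \<noteq> 0} \<subseteq> {x. x $ i1 \<ge> 0}
     \<and> (\<exists>g. continuous_on {x. x $ i1 \<ge> 0} g \<and>
            (\<forall>x. x $ i1 > 0 \<longrightarrow> g x = \<xi> x / (x $ i1) powr s))
     \<and> (\<exists>C. AE x in lebesgue. x \<in> halfsp i1 \<longrightarrow>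
            ((\<lambda>\<epsilon>. frac_lap_eps s \<epsilon> \<xi> x) \<longlongrightarrow> frac_lap s \<xi> x) (at_right 0)
            \<and> \<bar>frac_lap s \<xi> x\<bar> \<le> C)
     \<and> (\<exists>\<phi> \<epsilon>0. \<phi> \<in> borel_measurable lebesgue
            \<and> set_integrable lebesgue (halfsp i1) (\<lambda>x. (x $ i1) powr s * \<phi> x)
            \<and> \<epsilon>0 > 0
            \<and> (\<forall>\<epsilon>\<in>{0<..\<epsilon>0}. AE x in lebesgue. x \<in> halfsp i1 \<longrightarrow>
                  \<bar>frac_lap_eps s \<epsilon> \<xi> x\<bar> \<le> \<phi> x))}"

end

theory Submission
  imports Defs
begin

lemma powr_int_0:
  fixes a t :: real assumes a: "a > -1" and t: "t \<ge> 0"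
  shows "set_integrable lborel {0..t} (\<lambda>r. r powr a)"
    "(LINT r:{0..t}|lborel. r powr a) = t powr (a+1) / (a+1)"
proof -
  have hi: "((\<lambda>r. r powr a) has_integral (t powr (a+1) / (a+1))) {0..t}"
    by (rule has_integral_powr_from_0[OF a t])
  hence "(\<lambda>r. r powr a) absolutely_integrable_on {0..t}"
    by (intro nonnegative_absolutely_integrable_1) (auto simp: integrable_on_def)
  hence li: "set_integrable lebesgue {0..t} (\<lambda>r. r powr a)" .
  have meas: "(\<lambda>r. indicator {0..t} r *\<^sub>R (r powr a)) \<in> borel_measurable lborel"
    by measurable
  show si: "set_integrable lborel {0..t} (\<lambda>r. r powr a)"
    using li meas unfolding set_integrable_def
    by (simp add: integrable_completion)
  show "(LINT r:{0..t}|lborel. r powr a) = t powr (a+1) / (a+1)"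
    using set_borel_integral_eq_integral(2)[OF si] hi integral_unique by metis
qed

definition gk :: "real \<Rightarrow> real \<Rightarrow> real \<Rightarrow> real" where
  "gk s N r = r powr (s - 1) / (r + 1) powr (N / 2)"

definition Fk :: "real \<Rightarrow> real \<Rightarrow> real \<Rightarrow> real" where
  "Fk s N t = (LINT r:{0..t}|lborel. gk s N r)"

locale sN = fixes s N :: real assumes s0: "0 < s" and s1: "s < 1" and sN: "2 * s \<le> N"
begin

lemma gk_nonneg: "r \<ge> 0 \<Longrightarrow> gk s N r \<ge> 0"
  by (simp add: gk_def)

lemma gk_le1: assumes "r \<ge> 0" shows "gk s N r \<le> r powr (s - 1)"
proof -
  have "1 \<le> (r + 1) powr (N / 2)" using assms sN s0 by (intro ge_one_powr_ge_zero) auto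
  hence "r powr (s - 1) / (r + 1) powr (N / 2) \<le> r powr (s - 1) / 1"
    by (intro divide_left_mono) auto
  thus ?thesis by (simp add: gk_def)
qed

lemma gk_le2: assumes "r \<ge> 0" shows "gk s N r \<le> r powr (s/2 - 1)"
proof (cases "r = 0")
  case True thus ?thesis by (simp add: gk_def)
next
  case False
  hence r: "r > 0" using assms by simp
  have a: "(r + 1) powr s \<le> (r + 1) powr (N / 2)" using sN r by (intro powr_mono) auto
  have b: "r powr (s/2) \<le> (r + 1) powr s"
  proof -
    have "r powr (s/2) = (r powr (1/2)) powr s" using r by (simp add: powr_powr)
    also have "\<dots> = (sqrt r) powr s" using r by (simp add: powr_half_sqrt)
    finally have "r powr (s/2) = (sqrt r) powr s" .
    also have "\<dots> \<le> (r + 1) powr s"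
    proof (rule powr_mono2)
      show "sqrt r \<le> r + 1"
      proof (cases "r \<le> 1")
        case True
        hence "sqrt r \<le> 1" by simp
        thus ?thesis using r by linarith
      next
        case False thus ?thesis using real_sqrt_le_iff[of r "r^2"] r by (auto simp: power2_eq_square)
      qed
    qed (use s0 r in auto)
    finally show ?thesis .
  qed
  have "gk s N r \<le> r powr (s - 1) / (r + 1) powr s"
    unfolding gk_def using a r by (intro divide_left_mono) auto
  also have "\<dots> \<le> r powr (s - 1) / r powr (s/2)"
    using b r by (intro divide_left_mono) auto
  also have "\<dots> = r powr (s/2 - 1)" using r by (simp add: powr_diff[symmetric])
  finally show ?thesis .
qed

lemma gk_ge: assumes "0 \<le> r" "r \<le> t" shows "r powr (s - 1) / (t + 1) powr (N / 2) \<le> gk s N r"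
  unfolding gk_def using assms sN s0
  by (intro divide_left_mono powr_mono2) auto

lemma gk_meas[measurable]: "gk s N \<in> borel_measurable borel"
  unfolding gk_def by measurable

lemma gk_int: assumes t: "t \<ge> 0" shows "set_integrable lborel {0..t} (gk s N)"
proof -
  have "set_integrable lborel {0..t} (\<lambda>r. r powr (s - 1))" using powr_int_0 s0 t by auto
  thus ?thesis unfolding set_integrable_def
    by (rule Bochner_Integration.integrable_bound) (auto simp: indicator_def gk_nonneg gk_le1)
qed

lemma Fk_upper: assumes t: "t \<ge> 0" shows "Fk s N t \<le> t powr s / s"
proof -
  have "Fk s N t \<le> (LINT r:{0..t}|lborel. r powr (s - 1))"
    unfolding Fk_def using powr_int_0[of "s-1" t] s0 t
    by (intro set_integral_mono gk_int gk_le1) auto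
  also have "\<dots> = t powr s / s" using powr_int_0[of "s-1" t] s0 t by simp
  finally show ?thesis .
qed

lemma Fk_upper2: assumes t: "t \<ge> 0" shows "Fk s N t \<le> t powr (s/2) / (s/2)"
proof -
  have "Fk s N t \<le> (LINT r:{0..t}|lborel. r powr (s/2 - 1))"
    unfolding Fk_def using powr_int_0[of "s/2-1" t] s0 t
    by (intro set_integral_mono gk_int gk_le2) auto
  also have "\<dots> = t powr (s/2) / (s/2)" using powr_int_0[of "s/2-1" t] s0 t by simp
  finally show ?thesis .
qed

lemma Fk_lower: assumes t: "t \<ge> 0" shows "t powr s / s / (t + 1) powr (N / 2) \<le> Fk s N t"
proof -
  have "(LINT r:{0..t}|lborel. r powr (s - 1) / (t + 1) powr (N / 2)) \<le> Fk s N t"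
    unfolding Fk_def using powr_int_0[of "s-1" t] s0 t
    by (intro set_integral_mono gk_int gk_ge set_integral_divide_zero) 
       (auto intro: set_integrable_divide)
  moreover have "(LINT r:{0..t}|lborel. r powr (s - 1) / (t + 1) powr (N / 2)) = 
     (LINT r:{0..t}|lborel. r powr (s - 1)) / (t + 1) powr (N / 2)"
    by (rule set_integral_divide_zero)
  ultimately show ?thesis using powr_int_0[of "s-1" t] s0 t by simp
qed

lemma Fk_nonneg: "Fk s N t \<ge> 0"
  unfolding Fk_def set_lebesgue_integral_def
  by (intro integral_nonneg_AE) (auto simp: indicator_def gk_nonneg)

lemma Fk_mono: "mono (Fk s N)"
proof
  fix t t' :: real assume "t \<le> t'"
  show "Fk s N t \<le> Fk s N t'"
  proof (cases "t < 0")
    case True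
    hence "Fk s N t = 0" by (simp add: Fk_def set_lebesgue_integral_def)
    thus ?thesis using Fk_nonneg by simp
  next
    case False
    show ?thesis unfolding Fk_def set_lebesgue_integral_def
      apply (rule integral_mono)
      using gk_int[of t] gk_int[of t'] False \<open>t \<le> t'\<close> apply (auto simp: set_integrable_def)[2]
      using \<open>t \<le> t'\<close> by (auto simp: indicator_def gk_nonneg)
  qed
qed

lemma Fk_meas[measurable]: "Fk s N \<in> borel_measurable borel"
  using Fk_mono borel_measurable_mono by blast

end

lemma sq_powr: "(d::real) > 0 \<Longrightarrow> (d\<^sup>2) powr s = d powr (2 * s)"
proof -
  assume d: "d > 0"
  have "d powr (2 * s) = (d powr 2) powr s" by (simp add: powr_powr)
  also have "d powr 2 = d\<^sup>2" using d by (simp add: powr_numeral)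
  finally show ?thesis ..
qed

lemma alg1: "(a::real) * (k / 2 * A * (B * X * E / D / s)) = (k * B / 2 / s) * X * (a * E) * (A / D)"
  by (simp add: field_simps)

lemma alg2: "(a::real) * (k / 2 * A * (B * X * E / D / (s/2))) = (k * B / s) * X * (a * E) * (A / D)"
  by (simp add: field_simps)
lemma D2_powr:
  fixes d t N :: real assumes d: "d > 0" and t: "t \<ge> 0"
  shows "(d\<^sup>2 * (t + 1)) powr (- N / 2) = d powr (- N) / (t + 1) powr (N / 2)"
proof -
  have "(d\<^sup>2 * (t + 1)) powr (- N / 2) = (d\<^sup>2) powr (- N / 2) * (t + 1) powr (- N / 2)"
    using d t by (simp add: powr_mult)
  also have "(d\<^sup>2) powr (- N / 2) = d powr (- N)"
  proof -
    have "d powr (2 * (- N / 2)) = (d powr 2) powr (- N / 2)" by (simp add: powr_powr)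
    also have "d powr 2 = d\<^sup>2" using d by (simp add: powr_numeral)
    finally show ?thesis by simp
  qed
  also have "(t + 1) powr (- N / 2) = 1 / (t + 1) powr (N / 2)"
    using t by (simp add: powr_minus_divide)
  finally show ?thesis by simp
qed

locale GS = fixes i1 :: "'n::finite" and s :: real
  assumes s0: "0 < s" and s1: "s < 1" and sN: "2 * s \<le> real CARD('n)"
begin

abbreviation "ee \<equiv> (axis i1 1 :: real^'n)"
definition "Ge \<epsilon> x = \<epsilon> powr (-s) * Ginf i1 s x (\<epsilon> *\<^sub>R ee)"
definition "kap = kappa CARD('n) s"
definition "KK = Kcal CARD('n) s"

sublocale F: sN s "real CARD('n)" using s0 s1 sN by unfold_locales auto

lemma N_pos: "real CARD('n) > 0" by simp

lemma kap_pos: "kap > 0"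
proof -
  have "sin (pi * s) > 0" using s0 s1 by (intro sin_gt_zero) auto
  moreover have "Gamma (real CARD('n) / 2) > 0" by (intro Gamma_real_pos) simp
  ultimately show ?thesis unfolding kap_def kappa_def by simp
qed

lemma KK_eq: "KK = kap * 2 powr (2 * s - 1) / s" unfolding KK_def kap_def Kcal_def ..

lemma KK_pos: "KK > 0" using kap_pos s0 unfolding KK_eq by simp

lemma Ginf_eq: "Ginf i1 s x y = kap / 2 * norm (x - y) powr (2 * s - real CARD('n)) *
   Fk s (real CARD('n)) (4 * (x $ i1) * (y $ i1) / (norm (x - y))\<^sup>2)"
  unfolding Ginf_def Fk_def gk_def kap_def ..

lemma Ge_eq: "Ge \<epsilon> x = \<epsilon> powr (-s) * (kap / 2 * norm (x - \<epsilon> *\<^sub>R ee) powr (2 * s - real CARD('n)) *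
   Fk s (real CARD('n)) (4 * (x $ i1) * \<epsilon> / (norm (x - \<epsilon> *\<^sub>R ee))\<^sup>2))"
  unfolding Ge_def Ginf_eq by simp

lemma norm_pm: "(norm (x + \<epsilon> *\<^sub>R ee))\<^sup>2 = (norm (x - \<epsilon> *\<^sub>R ee))\<^sup>2 + 4 * \<epsilon> * (x $ i1)"
  by (simp add: power2_norm_eq_inner inner_add_left inner_add_right inner_diff_left inner_diff_right
      inner_axis inner_commute algebra_simps)

lemma Ge_nonneg: "\<epsilon> > 0 \<Longrightarrow> Ge \<epsilon> x \<ge> 0"
  unfolding Ge_eq using kap_pos F.Fk_nonneg by simp

lemma t_powr:
  fixes \<epsilon> x1 d p :: real
  assumes e: "\<epsilon> > 0" and x1: "x1 > 0" and d: "d > 0"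
  shows "(4 * x1 * \<epsilon> / d\<^sup>2) powr p = 4 powr p * x1 powr p * \<epsilon> powr p / d powr (2 * p)"
proof -
  have "(d\<^sup>2) powr p = d powr (2 * p)" using d by (rule sq_powr)
  moreover have "(4 * x1 * \<epsilon>) powr p = 4 powr p * x1 powr p * \<epsilon> powr p"
    using e x1 by (simp add: powr_mult)
  ultimately show ?thesis using e x1 d by (simp add: powr_divide)
qed

lemma four_powr: "(4::real) powr p = 2 powr (2 * p)"
  by (simp add: powr_powr[symmetric])

lemma Ge_core:
  assumes e: "\<epsilon> > 0" and x1: "x1 > 0" and d: "d > 0"
  shows "\<epsilon> powr (-s) * (kap / 2 * d powr (2 * s - real CARD('n)) * ((4 * x1 * \<epsilon> / d\<^sup>2) powr s / s))
     = KK * x1 powr s * d powr (- real CARD('n))"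
proof -
  have "\<epsilon> powr (-s) * (kap / 2 * d powr (2 * s - real CARD('n)) * ((4 * x1 * \<epsilon> / d\<^sup>2) powr s / s))
     = \<epsilon> powr (-s) * (kap / 2 * d powr (2 * s - real CARD('n)) *
      (4 powr s * x1 powr s * \<epsilon> powr s / d powr (2 * s) / s))"
    by (simp only: t_powr[OF e x1 d])
  also have "\<dots> = (kap * 4 powr s / 2 / s) * x1 powr s * (\<epsilon> powr (-s) * \<epsilon> powr s)
        * (d powr (2 * s - real CARD('n)) / d powr (2 * s))"
    by (simp only: alg1)
  also have "\<epsilon> powr (-s) * \<epsilon> powr s = 1" using e by (simp add: powr_add[symmetric])
  also have "d powr (2 * s - real CARD('n)) / d powr (2 * s) = d powr (- real CARD('n))"
    using d by (simp add: powr_diff[symmetric])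
  also have "kap * 4 powr s / 2 / s = KK"
  proof -
    have "(4::real) powr s = 2 powr (2 * s - 1) * 2" by (simp add: four_powr powr_diff)
    thus ?thesis unfolding KK_eq by simp
  qed
  finally show ?thesis by simp
qed

lemma Ge_upper:
  assumes e: "\<epsilon> > 0" and x1: "x $ i1 > 0"
  shows "Ge \<epsilon> x \<le> KK * (x $ i1) powr s * norm (x - \<epsilon> *\<^sub>R ee) powr (- real CARD('n))"
proof (cases "x = \<epsilon> *\<^sub>R ee")
  case True thus ?thesis by (simp add: Ge_eq)
next
  case False
  define d where "d = norm (x - \<epsilon> *\<^sub>R ee)"
  have d: "d > 0" using False by (simp add: d_def)
  define t where "t = 4 * (x $ i1) * \<epsilon> / d\<^sup>2"
  have t: "t \<ge> 0" using e x1 d by (simp add: t_def)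
  have "Ge \<epsilon> x = \<epsilon> powr (-s) * (kap / 2 * d powr (2 * s - real CARD('n)) * Fk s (real CARD('n)) t)"
    unfolding Ge_eq d_def t_def ..
  also have "\<dots> \<le> \<epsilon> powr (-s) * (kap / 2 * d powr (2 * s - real CARD('n)) * (t powr s / s))"
    using kap_pos F.Fk_upper[OF t] by (intro mult_left_mono) auto
  also have "\<dots> = KK * (x $ i1) powr s * d powr (- real CARD('n))"
    unfolding t_def by (rule Ge_core[OF e x1 d])
  finally show ?thesis unfolding d_def .
qed

lemma Ge_lower:
  assumes e: "\<epsilon> > 0" and x1: "x $ i1 > 0" and ne: "x \<noteq> \<epsilon> *\<^sub>R ee"
  shows "KK * (x $ i1) powr s * norm (x + \<epsilon> *\<^sub>R ee) powr (- real CARD('n)) \<le> Ge \<epsilon> x"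
proof -
  define d where "d = norm (x - \<epsilon> *\<^sub>R ee)"
  have d: "d > 0" using ne by (simp add: d_def)
  define t where "t = 4 * (x $ i1) * \<epsilon> / d\<^sup>2"
  have t: "t \<ge> 0" using e x1 d by (simp add: t_def)
  have D2: "(norm (x + \<epsilon> *\<^sub>R ee))\<^sup>2 = d\<^sup>2 * (t + 1)"
  proof -
    have "d\<^sup>2 * t = 4 * (x $ i1) * \<epsilon>" unfolding t_def using d by simp
    thus ?thesis by (simp add: norm_pm d_def[symmetric] algebra_simps)
  qed
  have "KK * (x $ i1) powr s * norm (x + \<epsilon> *\<^sub>R ee) powr (- real CARD('n))
      = KK * (x $ i1) powr s * ((norm (x + \<epsilon> *\<^sub>R ee))\<^sup>2) powr (- real CARD('n) / 2)"
    by (subst sq_powr) (use D2 d t in auto)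
  also have "\<dots> = KK * (x $ i1) powr s * (d powr (- real CARD('n)) / (t + 1) powr (real CARD('n) / 2))"
    by (simp only: D2 D2_powr[OF d t])
  also have "\<dots> = \<epsilon> powr (-s) * (kap / 2 * d powr (2 * s - real CARD('n)) * (t powr s / s))
       / (t + 1) powr (real CARD('n) / 2)"
    unfolding t_def Ge_core[OF e x1 d] by simp
  also have "\<dots> = \<epsilon> powr (-s) * (kap / 2 * d powr (2 * s - real CARD('n)) *
       (t powr s / s / (t + 1) powr (real CARD('n) / 2)))"
    by simp
  also have "\<dots> \<le> \<epsilon> powr (-s) * (kap / 2 * d powr (2 * s - real CARD('n)) * Fk s (real CARD('n)) t)"
    using kap_pos F.Fk_lower[OF t] by (intro mult_left_mono) auto
  also have "\<dots> = Ge \<epsilon> x"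
    unfolding Ge_eq d_def t_def ..
  finally show ?thesis .
qed

lemma Ge_upper2:
  assumes e: "\<epsilon> > 0" and x1: "x $ i1 > 0"
  shows "Ge \<epsilon> x \<le> (kap * 2 powr s / s) * \<epsilon> powr (-s/2) * (x $ i1) powr (s/2)
          * norm (x - \<epsilon> *\<^sub>R ee) powr (s - real CARD('n))"
proof (cases "x = \<epsilon> *\<^sub>R ee")
  case True thus ?thesis by (simp add: Ge_eq)
next
  case False
  define d where "d = norm (x - \<epsilon> *\<^sub>R ee)"
  have d: "d > 0" using False by (simp add: d_def)
  define t where "t = 4 * (x $ i1) * \<epsilon> / d\<^sup>2"
  have t: "t \<ge> 0" using e x1 d by (simp add: t_def)
  have "Ge \<epsilon> x = \<epsilon> powr (-s) * (kap / 2 * d powr (2 * s - real CARD('n)) * Fk s (real CARD('n)) t)"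
    unfolding Ge_eq d_def t_def ..
  also have "\<dots> \<le> \<epsilon> powr (-s) * (kap / 2 * d powr (2 * s - real CARD('n)) * (t powr (s/2) / (s/2)))"
    using kap_pos F.Fk_upper2[OF t] by (intro mult_left_mono) auto
  also have "\<dots> = \<epsilon> powr (-s) * (kap / 2 * d powr (2 * s - real CARD('n)) *
       (4 powr (s/2) * (x $ i1) powr (s/2) * \<epsilon> powr (s/2) / d powr (2 * (s/2)) / (s/2)))"
    unfolding t_def by (simp only: t_powr[OF e x1 d])
  also have "\<dots> = (kap * 4 powr (s/2) / s) * (x $ i1) powr (s/2) * (\<epsilon> powr (-s) * \<epsilon> powr (s/2))
        * (d powr (2 * s - real CARD('n)) / d powr s)"
    by (simp only: alg2 mult_2[symmetric] times_divide_eq_right nonzero_mult_div_cancel_left) (simp add: ac_simps)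
  also have "\<epsilon> powr (-s) * \<epsilon> powr (s/2) = \<epsilon> powr (-s/2)" using e by (simp add: powr_add[symmetric])
  also have "d powr (2 * s - real CARD('n)) / d powr s = d powr (s - real CARD('n))"
    using d by (simp add: powr_diff[symmetric])
  also have "(4::real) powr (s/2) = 2 powr s" by (simp add: four_powr)
  finally show ?thesis unfolding d_def by (simp add: mult_ac)
qed

end

lemma pow2_bracket1:
  fixes q :: real assumes "q \<ge> 1" shows "\<exists>k::nat. 2^k \<le> q \<and> q < 2^(Suc k)"
proof -
  obtain n where n: "q < 2^n" using real_arch_pow[of 2 q] by auto
  have "\<not> q < 2^0" using assms by simp
  from ex_least_nat_less[of "\<lambda>n. q < 2^n", OF n this]
  obtain k where "\<not> q < 2^k" "q < 2^Suc k" by auto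
  thus ?thesis by (intro exI[of _ k]) auto
qed

lemma pow2_bracket2:
  fixes q :: real assumes "q > 1" shows "\<exists>k::nat. 2^k < q \<and> q \<le> 2^(Suc k)"
proof -
  obtain n where n: "q < 2^n" using real_arch_pow[of 2 q] by auto
  hence n': "q \<le> 2^n" by simp
  have "\<not> q \<le> 2^0" using assms by simp
  from ex_least_nat_less[of "\<lambda>n. q \<le> 2^n", OF n' this]
  obtain k where "\<not> q \<le> 2^k" "q \<le> 2^Suc k" by auto
  thus ?thesis by (intro exI[of _ k]) auto
qed

definition Vb :: "'a::euclidean_space itself \<Rightarrow> real" where
  "Vb (_::'a itself) = measure lborel (ball (0::'a) 1)"

lemma emeasure_ball_eq:
  fixes c :: "'a::euclidean_space" assumes r: "r \<ge> 0"
  shows "emeasure lebesgue (ball c r) = ennreal (r ^ DIM('a) * Vb TYPE('a))"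
proof -
  have "emeasure lebesgue (ball c r) = ennreal (measure lborel (ball c r))"
    using emeasure_lborel_ball_finite[of c r] by (subst emeasure_eq_ennreal_measure) auto
  thus ?thesis using content_ball_conv_unit_ball[OF r, of c] by (simp add: Vb_def)
qed

lemma emeasure_ball_eq_lborel:
  fixes c :: "'a::euclidean_space" assumes r: "r \<ge> 0"
  shows "emeasure lborel (ball c r) = ennreal (r ^ DIM('a) * Vb TYPE('a))"
  using emeasure_ball_eq[OF r, of c] by simp

lemma Vb_nonneg: "Vb TYPE('a::euclidean_space) \<ge> 0" by (simp add: Vb_def)

lemma shell_le:
  fixes c :: "'a::euclidean_space"
  assumes b: "b \<ge> 0" and \<rho>: "\<rho> > 0"
  shows "(\<integral>\<^sup>+x. indicator {x. \<rho> < norm (x - c) \<and> norm (x - c) \<le> 2 * \<rho>} x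
            * ennreal (norm (x - c) powr (-b)) \<partial>lebesgue)
         \<le> ennreal (\<rho> powr (-b) * (4 * \<rho>) ^ DIM('a) * Vb TYPE('a))"
proof -
  have "(\<integral>\<^sup>+x. indicator {x. \<rho> < norm (x - c) \<and> norm (x - c) \<le> 2 * \<rho>} x
            * ennreal (norm (x - c) powr (-b)) \<partial>lebesgue)
        \<le> (\<integral>\<^sup>+x. ennreal (\<rho> powr (-b)) * indicator (ball c (4 * \<rho>)) x \<partial>lebesgue)"
  proof (rule nn_integral_mono)
    fix x
    show "indicator {x. \<rho> < norm (x - c) \<and> norm (x - c) \<le> 2 * \<rho>} x * ennreal (norm (x - c) powr - b)
         \<le> ennreal (\<rho> powr - b) * indicator (ball c (4 * \<rho>)) x"
    proof (cases "\<rho> < norm (x - c) \<and> norm (x - c) \<le> 2 * \<rho>")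
      case True
      hence "x \<in> ball c (4 * \<rho>)" using \<rho> by (simp add: dist_norm norm_minus_commute)
      moreover have "norm (x - c) powr - b \<le> \<rho> powr - b"
        using True \<rho> b by (intro powr_mono2') auto
      ultimately show ?thesis using True by (simp add: indicator_def)
    qed (auto simp: indicator_def)
  qed
  also have "\<dots> = ennreal (\<rho> powr (-b)) * emeasure lebesgue (ball c (4 * \<rho>))"
    by (rule nn_integral_cmult_indicator) simp
  also have "\<dots> = ennreal (\<rho> powr (-b)) * ennreal ((4 * \<rho>) ^ DIM('a) * Vb TYPE('a))"
    using \<rho> by (simp add: emeasure_ball_eq_lborel)
  also have "\<dots> = ennreal (\<rho> powr (-b) * (4 * \<rho>) ^ DIM('a) * Vb TYPE('a))"
    using \<rho> Vb_nonneg[where 'a='a] by (simp add: ennreal_mult[symmetric] mult.assoc)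
  finally show ?thesis .
qed

lemma ennreal_le_suminf: "(f k :: ennreal) \<le> (\<Sum>n. f n)"
  using sum_le_suminf[of f "{k}"] by (simp add: summableI)

lemma term_eq:
  assumes \<rho>: "\<rho> > 0"
  shows "\<rho> powr (-b) * (4 * \<rho>) ^ n * V = 4 ^ n * V * \<rho> powr (real n - b)"
proof -
  have "\<rho> powr (-b) * (4 * \<rho>) ^ n = 4 ^ n * (\<rho> powr (-b) * \<rho> ^ n)" by (simp add: power_mult_distrib)
  also have "\<rho> powr (-b) * \<rho> ^ n = \<rho> powr (real n - b)"
    using \<rho> by (simp add: powr_realpow[symmetric] powr_add[symmetric])
  finally show ?thesis by simp
qed

lemma inner_ball:
  fixes a :: real assumes a: "0 < a" "a \<le> DIM('a::euclidean_space)"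
  shows "\<exists>C\<ge>0. \<forall>r>0. \<forall>c::'a. (\<integral>\<^sup>+x. indicator (ball c r) x * ennreal (norm (x - c) powr (a - DIM('a))) \<partial>lebesgue)
          \<le> ennreal (C * r powr a)"
proof -
  define q :: real where "q = 2 powr (-a)"
  have q: "0 \<le> q" "q < 1" using a by (auto simp: q_def powr_less_one)
  have sq: "summable (\<lambda>k. q ^ Suc k)" using q by (simp add: summable_geometric)
  define C where "C = 4 ^ DIM('a) * Vb TYPE('a) * (\<Sum>k. q ^ Suc k)"
  have "0 \<le> (\<Sum>k. q ^ Suc k)" by (rule suminf_nonneg[OF sq]) (use q in simp)
  hence C: "C \<ge> 0" unfolding C_def using Vb_nonneg[where 'a='a] by simp
  show ?thesis
  proof (intro exI[of _ C] conjI allI impI C)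
    fix r :: real and c :: 'a assume r: "r > 0"
    define b where "b = DIM('a) - a"
    have b: "b \<ge> 0" using a by (simp add: b_def)
    define \<rho> where "\<rho> k = r / 2 ^ Suc k" for k :: nat
    have \<rho>: "\<rho> k > 0" for k using r by (simp add: \<rho>_def)
    define sh where "sh k = {x. \<rho> k < norm (x - c) \<and> norm (x - c) \<le> 2 * \<rho> k}" for k
    define f where "f x = ennreal (norm (x - c) powr (-b))" for x
    have fe: "a - DIM('a) = -b" by (simp add: b_def)
    have pt: "indicator (ball c r) x * f x \<le> (\<Sum>k. indicator (sh k) x * f x)" for x
    proof (cases "x \<in> ball c r \<and> x \<noteq> c")
      case True
      define y where "y = norm (x - c)"
      have y: "0 < y" "y < r" using True by (auto simp: y_def dist_norm norm_minus_commute)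
      obtain k where k: "2 ^ k \<le> r / y" "r / y < 2 ^ Suc k"
        using pow2_bracket1[of "r / y"] y by auto
      have "x \<in> sh k"
      proof -
        have "y * 2 ^ k \<le> r" using k(1) y by (simp add: field_simps)
        hence "y \<le> 2 * \<rho> k" by (simp add: \<rho>_def field_simps)
        moreover have "r < y * 2 ^ Suc k" using k(2) y by (simp add: field_simps)
        hence "\<rho> k < y" by (simp add: \<rho>_def field_simps)
        ultimately show ?thesis by (simp add: sh_def y_def)
      qed
      hence "indicator (ball c r) x * f x = indicator (sh k) x * f x" using True by simp
      also have "\<dots> \<le> (\<Sum>k. indicator (sh k) x * f x)" by (rule ennreal_le_suminf)
      finally show ?thesis .
    next
      case False
      hence "indicator (ball c r) x * f x = 0" by (auto simp: f_def)
      thus ?thesis by (metis zero_le)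
    qed
    have "(\<integral>\<^sup>+x. indicator (ball c r) x * ennreal (norm (x - c) powr (a - DIM('a))) \<partial>lebesgue)
        = (\<integral>\<^sup>+x. indicator (ball c r) x * f x \<partial>lebesgue)" unfolding f_def fe ..
    also have "\<dots> \<le> (\<integral>\<^sup>+x. (\<Sum>k. indicator (sh k) x * f x) \<partial>lebesgue)"
      by (intro nn_integral_mono pt)
    also have "\<dots> = (\<Sum>k. \<integral>\<^sup>+x. indicator (sh k) x * f x \<partial>lebesgue)"
    proof (rule nn_integral_suminf)
      fix k
      have "sh k \<in> sets borel" unfolding sh_def by measurable
      hence "sh k \<in> sets lebesgue" by simp
      thus "(\<lambda>x. indicator (sh k) x * f x) \<in> borel_measurable lebesgue"
        unfolding f_def by (intro borel_measurable_times_ennreal borel_measurable_indicator measurable_completion) 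
          (auto intro!: measurable_completion)
    qed
    also have "\<dots> \<le> (\<Sum>k. ennreal (4 ^ DIM('a) * Vb TYPE('a) * r powr a * q ^ Suc k))"
    proof (intro suminf_le summableI)
      fix k
      have "(\<integral>\<^sup>+x. indicator (sh k) x * f x \<partial>lebesgue) \<le> ennreal (\<rho> k powr (-b) * (4 * \<rho> k) ^ DIM('a) * Vb TYPE('a))"
        unfolding sh_def f_def by (rule shell_le[OF b \<rho>])
      also have "\<rho> k powr (-b) * (4 * \<rho> k) ^ DIM('a) * Vb TYPE('a) = 4 ^ DIM('a) * Vb TYPE('a) * \<rho> k powr a"
        using term_eq[OF \<rho>[of k], of b "DIM('a)" "Vb TYPE('a)"] by (simp add: b_def)
      also have "\<rho> k powr a = r powr a * q ^ Suc k"
        using r by (simp add: \<rho>_def q_def powr_divide powr_realpow[symmetric] powr_powr powr_minus_divide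
            powr_mult_base powr_add[symmetric]) (simp add: powr_minus divide_inverse powr_powr mult.commute powr_realpow distrib_left)
      finally show "(\<integral>\<^sup>+x. indicator (sh k) x * f x \<partial>lebesgue) \<le> ennreal (4 ^ DIM('a) * Vb TYPE('a) * r powr a * q ^ Suc k)"
        by (simp add: mult.assoc)
    qed
    also have "\<dots> = ennreal (\<Sum>k. 4 ^ DIM('a) * Vb TYPE('a) * r powr a * q ^ Suc k)"
      using q Vb_nonneg[where 'a='a] sq by (intro suminf_ennreal2 summable_mult) auto
    also have "(\<Sum>k. 4 ^ DIM('a) * Vb TYPE('a) * r powr a * q ^ Suc k) = C * r powr a"
      unfolding C_def using suminf_mult[OF sq, of "4 ^ DIM('a) * Vb TYPE('a) * r powr a"] by (simp add: mult_ac)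
    finally show "(\<integral>\<^sup>+x. indicator (ball c r) x * ennreal (norm (x - c) powr (a - DIM('a))) \<partial>lebesgue)
          \<le> ennreal (C * r powr a)" .
  qed
qed


lemma tail_int:
  fixes a :: real assumes a: "0 < a"
  shows "\<exists>C\<ge>0. \<forall>R>0. \<forall>c::'a::euclidean_space. (\<integral>\<^sup>+x. indicator {x. R < norm (x - c)} x * ennreal (norm (x - c) powr (- (DIM('a) + a))) \<partial>lebesgue)
          \<le> ennreal (C * R powr (-a))"
proof -
  define q :: real where "q = 2 powr (-a)"
  have q: "0 \<le> q" "q < 1" using a by (auto simp: q_def powr_less_one)
  have sq: "summable (\<lambda>k. q ^ k)" using q by (simp add: summable_geometric)
  define C where "C = 4 ^ DIM('a) * Vb TYPE('a) * (\<Sum>k. q ^ k)"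
  have "0 \<le> (\<Sum>k. q ^ k)" by (rule suminf_nonneg[OF sq]) (use q in simp)
  hence C: "C \<ge> 0" unfolding C_def using Vb_nonneg[where 'a='a] by simp
  show ?thesis
  proof (intro exI[of _ C] conjI allI impI C)
    fix R :: real and c :: 'a assume R: "R > 0"
    define b where "b = DIM('a) + a"
    have b: "b \<ge> 0" using a by (simp add: b_def)
    define \<rho> where "\<rho> k = R * 2 ^ k" for k :: nat
    have \<rho>: "\<rho> k > 0" for k using R by (simp add: \<rho>_def)
    define sh where "sh k = {x. \<rho> k < norm (x - c) \<and> norm (x - c) \<le> 2 * \<rho> k}" for k
    define f where "f x = ennreal (norm (x - c) powr (-b))" for x
    have pt: "indicator {x. R < norm (x - c)} x * f x \<le> (\<Sum>k. indicator (sh k) x * f x)" for x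
    proof (cases "R < norm (x - c)")
      case True
      define y where "y = norm (x - c)"
      have y: "R < y" using True by (auto simp: y_def)
      obtain k where k: "2 ^ k < y / R" "y / R \<le> 2 ^ Suc k"
        using pow2_bracket2[of "y / R"] y R by auto
      have "x \<in> sh k"
      proof -
        have "R * 2 ^ k < y" using k(1) R by (simp add: field_simps)
        hence "\<rho> k < y" by (simp add: \<rho>_def)
        moreover have "y \<le> R * 2 ^ Suc k" using k(2) R by (simp add: field_simps)
        hence "y \<le> 2 * \<rho> k" by (simp add: \<rho>_def)
        ultimately show ?thesis by (simp add: sh_def y_def)
      qed
      hence "indicator {x. R < norm (x - c)} x * f x = indicator (sh k) x * f x" using True by simp
      also have "\<dots> \<le> (\<Sum>k. indicator (sh k) x * f x)" by (rule ennreal_le_suminf)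
      finally show ?thesis .
    next
      case False
      hence "indicator {x. R < norm (x - c)} x * f x = 0" by (auto simp: f_def)
      thus ?thesis by (metis zero_le)
    qed
    have "(\<integral>\<^sup>+x. indicator {x. R < norm (x - c)} x * ennreal (norm (x - c) powr (- (DIM('a) + a))) \<partial>lebesgue)
        = (\<integral>\<^sup>+x. indicator {x. R < norm (x - c)} x * f x \<partial>lebesgue)" unfolding f_def b_def ..
    also have "\<dots> \<le> (\<integral>\<^sup>+x. (\<Sum>k. indicator (sh k) x * f x) \<partial>lebesgue)"
      by (intro nn_integral_mono pt)
    also have "\<dots> = (\<Sum>k. \<integral>\<^sup>+x. indicator (sh k) x * f x \<partial>lebesgue)"
    proof (rule nn_integral_suminf)
      fix k
      have "sh k \<in> sets borel" unfolding sh_def by measurable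
      hence "sh k \<in> sets lebesgue" by simp
      thus "(\<lambda>x. indicator (sh k) x * f x) \<in> borel_measurable lebesgue"
        unfolding f_def by (intro borel_measurable_times_ennreal borel_measurable_indicator measurable_completion) 
          (auto intro!: measurable_completion)
    qed
    also have "\<dots> \<le> (\<Sum>k. ennreal (4 ^ DIM('a) * Vb TYPE('a) * R powr (-a) * q ^ k))"
    proof (intro suminf_le summableI)
      fix k
      have "(\<integral>\<^sup>+x. indicator (sh k) x * f x \<partial>lebesgue) \<le> ennreal (\<rho> k powr (-b) * (4 * \<rho> k) ^ DIM('a) * Vb TYPE('a))"
        unfolding sh_def f_def by (rule shell_le[OF b \<rho>])
      also have "\<rho> k powr (-b) * (4 * \<rho> k) ^ DIM('a) * Vb TYPE('a) = 4 ^ DIM('a) * Vb TYPE('a) * \<rho> k powr (-a)"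
        using term_eq[OF \<rho>[of k], of b "DIM('a)" "Vb TYPE('a)"] by (simp add: b_def)
      also have "\<rho> k powr (-a) = R powr (-a) * q ^ k"
        using R by (simp add: \<rho>_def q_def powr_mult powr_realpow[symmetric] powr_powr mult.commute)
      finally show "(\<integral>\<^sup>+x. indicator (sh k) x * f x \<partial>lebesgue) \<le> ennreal (4 ^ DIM('a) * Vb TYPE('a) * R powr (-a) * q ^ k)"
        by (simp add: mult.assoc)
    qed
    also have "\<dots> = ennreal (\<Sum>k. 4 ^ DIM('a) * Vb TYPE('a) * R powr (-a) * q ^ k)"
      using q Vb_nonneg[where 'a='a] sq by (intro suminf_ennreal2 summable_mult) auto
    also have "(\<Sum>k. 4 ^ DIM('a) * Vb TYPE('a) * R powr (-a) * q ^ k) = C * R powr (-a)"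
      unfolding C_def using suminf_mult[OF sq, of "4 ^ DIM('a) * Vb TYPE('a) * R powr (-a)"] by (simp add: mult_ac)
    finally show "(\<integral>\<^sup>+x. indicator {x. R < norm (x - c)} x * ennreal (norm (x - c) powr (- (DIM('a) + a))) \<partial>lebesgue)
          \<le> ennreal (C * R powr (-a))" .
  qed
qed

lemma to_L:
  fixes f :: "'a \<Rightarrow> real"
  assumes m: "f \<in> borel_measurable M" and nn: "\<And>x. 0 \<le> f x"
    and b: "(\<integral>\<^sup>+x. ennreal (f x) \<partial>M) \<le> ennreal K" and K: "K \<ge> 0"
  shows "integrable M f" "integral\<^sup>L M f \<le> K"
proof -
  show i: "integrable M f"
    using m nn le_less_trans[OF b ennreal_less_top] by (intro integrableI_nonneg) auto
  have "ennreal (integral\<^sup>L M f) = (\<integral>\<^sup>+x. ennreal (f x) \<partial>M)"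
    using nn_integral_eq_integral[OF i] nn by simp
  also note b
  finally have "ennreal (integral\<^sup>L M f) \<le> ennreal K" .
  moreover have "0 \<le> integral\<^sup>L M f" using nn by (intro integral_nonneg_AE) auto
  ultimately show "integral\<^sup>L M f \<le> K"
    using ennreal_le_iff[OF K] by blast
qed

lemma inner_ball_L:
  fixes a :: real assumes a: "0 < a" "a \<le> DIM('a::euclidean_space)"
  shows "\<exists>C\<ge>0. \<forall>r>0. \<forall>c::'a. integrable lebesgue (\<lambda>x. indicator (ball c r) x * norm (x - c) powr (a - DIM('a)))
     \<and> (\<integral>x. indicator (ball c r) x * norm (x - c) powr (a - DIM('a)) \<partial>lebesgue) \<le> C * r powr a"
proof -
  obtain C where C: "C \<ge> 0" "\<And>r c. r > 0 \<Longrightarrow> (\<integral>\<^sup>+x. indicator (ball c r) x * ennreal (norm (x - (c::'a)) powr (a - DIM('a))) \<partial>lebesgue)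
          \<le> ennreal (C * r powr a)" using inner_ball[OF a] by blast
  show ?thesis
  proof (intro exI[of _ C] conjI allI impI C(1))
    fix r :: real and c :: 'a assume r: "r > 0"
    have eq: "ennreal (indicator (ball c r) x * norm (x - c) powr (a - DIM('a))) = 
       indicator (ball c r) x * ennreal (norm (x - (c::'a)) powr (a - DIM('a)))" for x
      by (simp add: indicator_def)
    have m: "(\<lambda>x. indicator (ball c r) x * norm (x - c) powr (a - DIM('a))) \<in> borel_measurable lebesgue"
      by (intro borel_measurable_times borel_measurable_indicator measurable_completion) auto
    note * = to_L[OF m _ , of "C * r powr a"]
    show "integrable lebesgue (\<lambda>x. indicator (ball c r) x * norm (x - c) powr (a - DIM('a)))"
      using * C(2)[OF r, of c] C(1) r unfolding eq by auto
    show "(\<integral>x. indicator (ball c r) x * norm (x - c) powr (a - DIM('a)) \<partial>lebesgue) \<le> C * r powr a"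
      using * C(2)[OF r, of c] C(1) r unfolding eq by auto
  qed
qed

lemma tail_L:
  fixes a :: real assumes a: "0 < a"
  shows "\<exists>C\<ge>0. \<forall>R>0. \<forall>c::'a::euclidean_space. integrable lebesgue (\<lambda>x. indicator {x. R < norm (x - c)} x * norm (x - c) powr (- (DIM('a) + a)))
     \<and> (\<integral>x. indicator {x. R < norm (x - c)} x * norm (x - c) powr (- (DIM('a) + a)) \<partial>lebesgue) \<le> C * R powr (-a)"
proof -
  obtain C where C: "C \<ge> 0" "\<And>R c. R > 0 \<Longrightarrow> (\<integral>\<^sup>+x. indicator {x. R < norm (x - c)} x * ennreal (norm (x - (c::'a)) powr (- (DIM('a) + a))) \<partial>lebesgue)
          \<le> ennreal (C * R powr (-a))" using tail_int[OF a] by blast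
  show ?thesis
  proof (intro exI[of _ C] conjI allI impI C(1))
    fix R :: real and c :: 'a assume R: "R > 0"
    have eq: "ennreal (indicator {x. R < norm (x - c)} x * norm (x - c) powr (- (DIM('a) + a))) = 
       indicator {x. R < norm (x - c)} x * ennreal (norm (x - (c::'a)) powr (- (DIM('a) + a)))" for x
      by (simp add: indicator_def)
    have "{x. R < norm (x - c)} \<in> sets borel" by measurable
    hence "{x. R < norm (x - c)} \<in> sets lebesgue" by simp
    hence m: "(\<lambda>x. indicator {x. R < norm (x - c)} x * norm (x - c) powr (- (DIM('a) + a))) \<in> borel_measurable lebesgue"
      by (intro borel_measurable_times borel_measurable_indicator measurable_completion) auto
    note * = to_L[OF m _ , of "C * R powr (-a)"]
    show "integrable lebesgue (\<lambda>x. indicator {x. R < norm (x - c)} x * norm (x - c) powr (- (DIM('a) + a)))"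
      using * C(2)[OF R, of c] C(1) R unfolding eq by auto
    show "(\<integral>x. indicator {x. R < norm (x - c)} x * norm (x - c) powr (- (DIM('a) + a)) \<partial>lebesgue) \<le> C * R powr (-a)"
      using * C(2)[OF R, of c] C(1) R unfolding eq by auto
  qed
qed

lemma DCT_at_right0:
  fixes f :: "real \<Rightarrow> 'a \<Rightarrow> real"
  assumes m: "\<And>t. f t \<in> borel_measurable M" and w: "integrable M w"
    and lim: "AE x in M. ((\<lambda>t. f t x) \<longlongrightarrow> 0) (at_right 0)"
    and bd: "\<forall>\<^sub>F t in at_right 0. AE x in M. norm (f t x) \<le> w x"
  shows "((\<lambda>t. integral\<^sup>L M (f t)) \<longlongrightarrow> 0) (at_right 0)"
proof -
  have "((\<lambda>t. integral\<^sup>L M (f (inverse t))) \<longlongrightarrow> integral\<^sup>L M (\<lambda>x. 0)) at_top"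
  proof (rule integral_dominated_convergence_at_top[OF _ _ w])
    show "AE x in M. ((\<lambda>t. f (inverse t) x) \<longlongrightarrow> 0) at_top"
      using lim by eventually_elim (simp add: filterlim_at_right_to_top)
    show "\<forall>\<^sub>F t in at_top. AE x in M. norm (f (inverse t) x) \<le> w x"
      using bd by (simp add: eventually_at_right_to_top)
  qed (use m in auto)
  thus ?thesis by (simp add: filterlim_at_right_to_top)
qed

context GS begin

lemma t1: "(\<lambda>x::real^'n. x $ i1) \<in> borel_measurable borel"
  by (intro borel_measurable_continuous_onI continuous_intros)
lemma t2: "(\<lambda>x::real^'n. 4 * x $ i1 * \<epsilon> / (norm (x - \<epsilon> *\<^sub>R ee))\<^sup>2) \<in> borel_measurable borel"
  using t1 by measurable
lemma Ge_meas[measurable]: "Ge \<epsilon> \<in> borel_measurable borel"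
proof -
  have "(\<lambda>x. Fk s (real CARD('n)) (4 * x $ i1 * \<epsilon> / (norm (x - \<epsilon> *\<^sub>R ee))\<^sup>2)) \<in> borel_measurable borel"
    using measurable_compose[OF t2 F.Fk_meas] by simp
  thus ?thesis unfolding Ge_eq[abs_def] by measurable
qed

lemma lim_pm:
  assumes x0: "x \<noteq> 0" and "c = 1 \<or> c = -1"
  shows "((\<lambda>\<epsilon>. K * norm (x + (c * \<epsilon>) *\<^sub>R ee) powr p) \<longlongrightarrow> K * norm x powr p) (at_right 0)"
proof -
  have "((\<lambda>\<epsilon>. x + (c * \<epsilon>) *\<^sub>R ee) \<longlongrightarrow> x + (c * 0) *\<^sub>R ee) (at_right 0)"
    by (intro tendsto_add tendsto_const tendsto_scaleR tendsto_mult tendsto_ident_at)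
  hence "((\<lambda>\<epsilon>. norm (x + (c * \<epsilon>) *\<^sub>R ee)) \<longlongrightarrow> norm x) (at_right 0)"
    using tendsto_norm by fastforce
  hence "((\<lambda>\<epsilon>. norm (x + (c * \<epsilon>) *\<^sub>R ee) powr p) \<longlongrightarrow> norm x powr p) (at_right 0)"
    using x0 by (intro tendsto_powr) auto
  thus ?thesis by (intro tendsto_mult_left)
qed

lemma Pcal_eq: "Pcal i1 s x = KK * (x $ i1) powr s * norm x powr (- real CARD('n))"
  unfolding Pcal_def KK_def by (simp add: mult_ac)

lemma P_meas[measurable]: "Pcal i1 s \<in> borel_measurable borel"
  unfolding Pcal_eq[abs_def] by measurable

lemma Ge_pw:
  assumes x1: "x $ i1 > 0"
  shows "((\<lambda>\<epsilon>. Ge \<epsilon> x) \<longlongrightarrow> Pcal i1 s x) (at_right 0)"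
proof (rule tendsto_sandwich)
  have x0: "x \<noteq> 0" using x1 by auto
  show "\<forall>\<^sub>F \<epsilon> in at_right 0. KK * (x $ i1) powr s * norm (x + \<epsilon> *\<^sub>R ee) powr (- real CARD('n)) \<le> Ge \<epsilon> x"
  proof -
    have "\<forall>\<^sub>F \<epsilon> in at_right 0. 0 < \<epsilon> \<and> \<epsilon> < x $ i1"
      using x1 by (intro eventually_conj eventually_at_right_less) (auto simp: eventually_at_right_field)
    thus ?thesis
    proof eventually_elim
      case (elim \<epsilon>)
      hence "x \<noteq> \<epsilon> *\<^sub>R ee" by (auto simp: vec_eq_iff axis_def)
      thus ?case using Ge_lower[of \<epsilon> x] elim x1 by auto
    qed
  qed
  show "\<forall>\<^sub>F \<epsilon> in at_right 0. Ge \<epsilon> x \<le> KK * (x $ i1) powr s * norm (x - \<epsilon> *\<^sub>R ee) powr (- real CARD('n))"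
    using Ge_upper[of _ x] x1 by (auto simp: eventually_at_right_field intro: exI[of _ 1])
  show "((\<lambda>\<epsilon>. KK * (x $ i1) powr s * norm (x + \<epsilon> *\<^sub>R ee) powr (- real CARD('n))) \<longlongrightarrow> Pcal i1 s x) (at_right 0)"
    unfolding Pcal_eq using lim_pm[OF x0, of 1 "KK * (x $ i1) powr s" "- real CARD('n)"] by (simp add: mult.assoc)
  show "((\<lambda>\<epsilon>. KK * (x $ i1) powr s * norm (x - \<epsilon> *\<^sub>R ee) powr (- real CARD('n))) \<longlongrightarrow> Pcal i1 s x) (at_right 0)"
    unfolding Pcal_eq using lim_pm[OF x0, of "-1" "KK * (x $ i1) powr s" "- real CARD('n)"] by (simp add: mult.assoc)
qed

end

lemma bl: "f \<in> borel_measurable borel \<Longrightarrow> f \<in> borel_measurable lebesgue"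
  by (rule measurable_completion) (simp add: measurable_lborel1)

lemma DIM_n: "DIM(real^'n::finite) = CARD('n)" by simp

context GS begin

lemma H_sets: "halfsp i1 \<in> sets lebesgue"
proof -
  have "open (halfsp i1)" unfolding halfsp_def by (intro open_Collect_less continuous_intros)
  hence "halfsp i1 \<in> sets borel" by simp
  thus ?thesis by simp
qed

lemma g_meas: "(\<lambda>x::real^'n. (x$i1) powr s * norm x powr (- real CARD('n))) \<in> borel_measurable borel"
proof -
  have n: "(\<lambda>x::real^'n. norm x) \<in> borel_measurable borel"
    by (intro borel_measurable_continuous_onI continuous_intros)
  show ?thesis by (intro borel_measurable_times powr_real_measurable t1 n borel_measurable_const)
qed
lemma sD: "s \<le> real DIM(real^'n)" using sN s0 by simp

lemma x1_le: "x $ i1 \<le> norm x"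
  using component_le_norm_cart[of x i1] by simp

lemma P_nonneg: "Pcal i1 s x \<ge> 0" unfolding Pcal_eq using KK_pos by simp

lemma P_le: assumes x1: "x $ i1 > 0" shows "Pcal i1 s x \<le> KK * norm x powr (s - real CARD('n))"
proof -
  have x0: "norm x > 0" using x1 x1_le[of x] by linarith
  have "(x $ i1) powr s \<le> norm x powr s" using x1 x1_le[of x] s0 by (intro powr_mono2) auto
  hence "Pcal i1 s x \<le> KK * norm x powr s * norm x powr (- real CARD('n))"
    unfolding Pcal_eq using KK_pos by (intro mult_right_mono mult_left_mono) auto
  also have "\<dots> = KK * norm x powr (s - real CARD('n))" using x0 by (simp add: powr_add[symmetric])
  finally show ?thesis .
qed

definition "W0 q x = indicator (halfsp i1) x * ((x $ i1) powr s * norm x powr (- real CARD('n)) * \<bar>q x\<bar>)"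

lemma W0_meas: "q \<in> borel_measurable lebesgue \<Longrightarrow> W0 q \<in> borel_measurable lebesgue"
  unfolding W0_def
  by (rule borel_measurable_times[OF borel_measurable_indicator[OF H_sets] borel_measurable_times[OF bl[OF g_meas] borel_measurable_abs]])

lemma W0_nonneg: "W0 q x \<ge> 0" unfolding W0_def by (simp add: indicator_def)

lemma W0_int:
  fixes q :: "real^'n \<Rightarrow> real" and B :: real
  assumes qm: "q \<in> borel_measurable lebesgue"
    and qB: "AE x in lebesgue. x \<in> halfsp i1 \<longrightarrow> \<bar>q x\<bar> \<le> B"
    and qT: "integrable lebesgue (\<lambda>x. indicator (halfsp i1 \<inter> {x. 1 < norm x}) x * ((x $ i1) powr s * norm x powr (- real CARD('n)) * \<bar>q x\<bar>))"
  shows "integrable lebesgue (W0 q)"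
proof -
  obtain Cin where Cin: "Cin \<ge> 0" "\<forall>r>0. \<forall>c::real^'n. integrable lebesgue (\<lambda>x. indicator (ball c r) x * norm (x - c) powr (s - DIM(real^'n)))
     \<and> (\<integral>x. indicator (ball c r) x * norm (x - c) powr (s - DIM(real^'n)) \<partial>lebesgue) \<le> Cin * r powr s"
    using inner_ball_L[OF s0 sD] by blast
  have "integrable lebesgue (\<lambda>x. indicator (ball (0::real^'n) 2) x * norm (x - 0) powr (s - DIM(real^'n)))"
    using Cin(2)[rule_format, of 2 0] by simp
  hence i1: "integrable lebesgue (\<lambda>x. \<bar>B\<bar> * (indicator (ball (0::real^'n) 2) x * norm (x - 0) powr (s - real CARD('n))))"
    by (intro integrable_mult_right) simp
  show ?thesis
  proof (rule Bochner_Integration.integrable_bound[OF Bochner_Integration.integrable_add[OF i1 qT]])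
    show "W0 q \<in> borel_measurable lebesgue" by (rule W0_meas[OF qm])
    show "AE x in lebesgue. norm (W0 q x) \<le> norm (\<bar>B\<bar> * (indicator (ball 0 2) x * norm (x - 0) powr (s - real CARD('n))) +
       indicator (halfsp i1 \<inter> {x. 1 < norm x}) x * ((x $ i1) powr s * norm x powr (- real CARD('n)) * \<bar>q x\<bar>))"
      using qB
    proof eventually_elim
      case (elim x)
      show ?case
      proof (cases "x \<in> halfsp i1")
        case False thus ?thesis by (simp add: W0_def)
      next
        case True
        hence x1: "x $ i1 > 0" by (simp add: halfsp_def)
        have x0: "norm x > 0" using x1 x1_le[of x] by linarith
        have qb: "\<bar>q x\<bar> \<le> \<bar>B\<bar>" using elim True by auto
        show ?thesis
        proof (cases "norm x \<le> 1")
          case True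
          have "(x $ i1) powr s \<le> norm x powr s" using x1 x1_le[of x] s0 by (intro powr_mono2) auto
          hence "W0 q x \<le> norm x powr s * norm x powr (- real CARD('n)) * \<bar>B\<bar>"
            unfolding W0_def using \<open>x \<in> halfsp i1\<close> qb by (auto intro!: mult_mono)
          also have "\<dots> = \<bar>B\<bar> * (indicator (ball 0 2) x * norm (x - 0) powr (s - real CARD('n)))"
            using True x0 by (simp add: powr_add[symmetric] indicator_def)
          finally show ?thesis using W0_nonneg[of q x] True by (simp add: indicator_def)
        next
          case False
          thus ?thesis using \<open>x \<in> halfsp i1\<close> W0_nonneg[of q x]
            by (simp add: W0_def indicator_def)
        qed
      qed
    qed
  qed
qed

end

context GS begin

definition "c1 = kap * 2 powr s / s * 3 powr (s/2)"
definition "c2 = KK * ((2/3) powr (- real CARD('n)) + 1)"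

lemma norm_ee: "norm (\<epsilon> *\<^sub>R ee) = \<bar>\<epsilon>\<bar>" by simp

lemma regI_pt:
  assumes e: "\<epsilon> > 0" and x1: "x $ i1 > 0" and xn: "norm x \<le> 3 * \<epsilon>"
  shows "\<bar>Ge \<epsilon> x - Pcal i1 s x\<bar> \<le> c1 * (indicator (ball (\<epsilon> *\<^sub>R ee) (5 * \<epsilon>)) x * norm (x - \<epsilon> *\<^sub>R ee) powr (s - real CARD('n)))
      + KK * (indicator (ball 0 (5 * \<epsilon>)) x * norm (x - 0) powr (s - real CARD('n)))"
proof -
  have m1: "x \<in> ball (\<epsilon> *\<^sub>R ee) (5 * \<epsilon>)"
  proof -
    have "norm (\<epsilon> *\<^sub>R ee - x) \<le> norm (\<epsilon> *\<^sub>R ee) + norm x" by (rule norm_triangle_ineq4)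
    thus ?thesis using e xn by (simp add: dist_norm)
  qed
  have m2: "x \<in> ball 0 (5 * \<epsilon>)" using xn e by simp
  have G: "Ge \<epsilon> x \<le> c1 * norm (x - \<epsilon> *\<^sub>R ee) powr (s - real CARD('n))"
  proof -
    have "\<epsilon> powr (-s/2) * (x $ i1) powr (s/2) \<le> \<epsilon> powr (-s/2) * (3 * \<epsilon>) powr (s/2)"
      using x1 x1_le[of x] xn s0 by (intro mult_left_mono powr_mono2) auto
    also have "\<dots> = 3 powr (s/2) * (\<epsilon> powr (-s/2) * \<epsilon> powr (s/2))" using e by (simp add: powr_mult)
    also have "\<epsilon> powr (-s/2) * \<epsilon> powr (s/2) = 1" using e by (simp add: powr_add[symmetric])
    finally have b: "\<epsilon> powr (-s/2) * (x $ i1) powr (s/2) \<le> 3 powr (s/2)" by simp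
    have "Ge \<epsilon> x \<le> (kap * 2 powr s / s) * (\<epsilon> powr (-s/2) * (x $ i1) powr (s/2))
          * norm (x - \<epsilon> *\<^sub>R ee) powr (s - real CARD('n))"
      using Ge_upper2[OF e x1] by (simp add: mult.assoc)
    also have "\<dots> \<le> (kap * 2 powr s / s) * 3 powr (s/2) * norm (x - \<epsilon> *\<^sub>R ee) powr (s - real CARD('n))"
      using b kap_pos s0 by (intro mult_right_mono mult_left_mono) auto
    finally show ?thesis by (simp add: c1_def)
  qed
  have "\<bar>Ge \<epsilon> x - Pcal i1 s x\<bar> \<le> Ge \<epsilon> x + Pcal i1 s x"
    using Ge_nonneg[OF e, of x] P_nonneg[of x] by linarith
  also have "\<dots> \<le> c1 * norm (x - \<epsilon> *\<^sub>R ee) powr (s - real CARD('n)) + KK * norm x powr (s - real CARD('n))"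
    using G P_le[OF x1] by linarith
  finally show ?thesis using m1 m2 by simp
qed

lemma regII_pt:
  assumes e: "\<epsilon> > 0" and x1: "x $ i1 > 0" and xn: "3 * \<epsilon> < norm x"
  shows "\<bar>Ge \<epsilon> x - Pcal i1 s x\<bar> \<le> c2 * ((x $ i1) powr s * norm x powr (- real CARD('n)))"
proof -
  have d: "2/3 * norm x \<le> norm (x - \<epsilon> *\<^sub>R ee)"
  proof -
    have "norm x - norm (\<epsilon> *\<^sub>R ee) \<le> norm (x - \<epsilon> *\<^sub>R ee)" by (rule norm_triangle_ineq2)
    thus ?thesis using e xn by simp
  qed
  have x0: "norm x > 0" using e xn by linarith
  have "norm (x - \<epsilon> *\<^sub>R ee) powr (- real CARD('n)) \<le> (2/3 * norm x) powr (- real CARD('n))"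
    using d x0 by (intro powr_mono2') auto
  also have "\<dots> = (2/3) powr (- real CARD('n)) * norm x powr (- real CARD('n))"
    using x0 by (subst powr_mult) auto
  finally have dd: "norm (x - \<epsilon> *\<^sub>R ee) powr (- real CARD('n)) \<le> (2/3) powr (- real CARD('n)) * norm x powr (- real CARD('n))" .
  have "\<bar>Ge \<epsilon> x - Pcal i1 s x\<bar> \<le> Ge \<epsilon> x + Pcal i1 s x"
    using Ge_nonneg[OF e, of x] P_nonneg[of x] by linarith
  also have "\<dots> \<le> KK * (x $ i1) powr s * ((2/3) powr (- real CARD('n)) * norm x powr (- real CARD('n)))
      + KK * (x $ i1) powr s * norm x powr (- real CARD('n))"
    using Ge_upper[OF e x1] dd KK_pos unfolding Pcal_eq
    by (intro add_mono order.trans[OF Ge_upper[OF e x1]] mult_left_mono) auto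
  also have "\<dots> = c2 * ((x $ i1) powr s * norm x powr (- real CARD('n)))"
    unfolding c2_def by (simp add: algebra_simps)
  finally show ?thesis .
qed

end

context GS begin

lemma c1_nonneg: "c1 \<ge> 0" unfolding c1_def using kap_pos s0 by simp
lemma c2_nonneg: "c2 \<ge> 0" unfolding c2_def using KK_pos by (intro mult_nonneg_nonneg) auto

lemma powr_lim0: "((\<lambda>\<epsilon>. (5 * \<epsilon>) powr s) \<longlongrightarrow> 0) (at_right 0)"
  by (rule tendsto_zero_powrI) (auto intro!: tendsto_eq_intros s0 simp: eventually_at_right_field intro: exI[of _ 1])

theorem core:
  fixes q :: "real^'n \<Rightarrow> real" and B :: real
  assumes qm: "q \<in> borel_measurable lebesgue"
    and qB: "AE x in lebesgue. x \<in> halfsp i1 \<longrightarrow> \<bar>q x\<bar> \<le> B"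
    and qT: "integrable lebesgue (\<lambda>x. indicator (halfsp i1 \<inter> {x. 1 < norm x}) x * ((x $ i1) powr s * norm x powr (- real CARD('n)) * \<bar>q x\<bar>))"
  shows "integrable lebesgue (\<lambda>x. indicator (halfsp i1) x * (Pcal i1 s x * q x))"
    and "\<forall>\<^sub>F \<epsilon> in at_right 0. integrable lebesgue (\<lambda>x. indicator (halfsp i1) x * ((Ge \<epsilon> x - Pcal i1 s x) * q x))"
    and "((\<lambda>\<epsilon>. \<integral>x. indicator (halfsp i1) x * (\<bar>Ge \<epsilon> x - Pcal i1 s x\<bar> * \<bar>q x\<bar>) \<partial>lebesgue) \<longlongrightarrow> 0) (at_right 0)"
proof -
  have W: "integrable lebesgue (W0 q)" by (rule W0_int[OF qm qB qT])
  have Gm: "Ge \<epsilon> \<in> borel_measurable lebesgue" for \<epsilon> by (rule bl[OF Ge_meas])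
  have Pm: "Pcal i1 s \<in> borel_measurable lebesgue" by (rule bl[OF P_meas])
  show "integrable lebesgue (\<lambda>x. indicator (halfsp i1) x * (Pcal i1 s x * q x))"
  proof (rule Bochner_Integration.integrable_bound[OF integrable_mult_right[OF W, of KK]])
    show "(\<lambda>x. indicator (halfsp i1) x * (Pcal i1 s x * q x)) \<in> borel_measurable lebesgue"
      by (intro borel_measurable_times borel_measurable_indicator H_sets Pm qm)
    show "AE x in lebesgue. norm (indicator (halfsp i1) x * (Pcal i1 s x * q x)) \<le> norm (KK * W0 q x)"
      using KK_pos W0_nonneg[of q]
      by (intro AE_I2) (auto simp: W0_def Pcal_eq indicator_def abs_mult)
  qed
  define A where "A \<epsilon> x = indicator (halfsp i1) x * (\<bar>Ge \<epsilon> x - Pcal i1 s x\<bar> * \<bar>q x\<bar>)" for \<epsilon> x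
  define A1 where "A1 \<epsilon> x = indicator (cball 0 (3 * \<epsilon>)) x * A \<epsilon> x" for \<epsilon> x
  define A2 where "A2 \<epsilon> x = indicator (- cball 0 (3 * \<epsilon>)) x * A \<epsilon> x" for \<epsilon> x
  have Am: "A \<epsilon> \<in> borel_measurable lebesgue" for \<epsilon> unfolding A_def
    by (intro borel_measurable_times borel_measurable_indicator H_sets borel_measurable_abs borel_measurable_diff Gm Pm qm)
  have A1m: "A1 \<epsilon> \<in> borel_measurable lebesgue" for \<epsilon> unfolding A1_def
    by (intro borel_measurable_times borel_measurable_indicator Am) simp
  have A2m: "A2 \<epsilon> \<in> borel_measurable lebesgue" for \<epsilon> unfolding A2_def
    by (intro borel_measurable_times borel_measurable_indicator Am) simp
  have A_nonneg: "A \<epsilon> x \<ge> 0" for \<epsilon> x unfolding A_def by simp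
  have Asplit: "A \<epsilon> x = A1 \<epsilon> x + A2 \<epsilon> x" for \<epsilon> x unfolding A1_def A2_def by (simp add: indicator_def)
  obtain Cin where Cin: "Cin \<ge> 0" "\<forall>r>0. \<forall>c::real^'n. integrable lebesgue (\<lambda>x. indicator (ball c r) x * norm (x - c) powr (s - DIM(real^'n)))
     \<and> (\<integral>x. indicator (ball c r) x * norm (x - c) powr (s - DIM(real^'n)) \<partial>lebesgue) \<le> Cin * r powr s"
    using inner_ball_L[OF s0 sD] by blast
  define R1 where "R1 \<epsilon> x = \<bar>B\<bar> * (c1 * (indicator (ball (\<epsilon> *\<^sub>R ee) (5 * \<epsilon>)) x * norm (x - \<epsilon> *\<^sub>R ee) powr (s - real CARD('n)))
      + KK * (indicator (ball (0::real^'n) (5 * \<epsilon>)) x * norm (x - 0) powr (s - real CARD('n))))" for \<epsilon> x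
  define \<beta> where "\<beta> \<epsilon> = \<bar>B\<bar> * (c1 * Cin + KK * Cin) * (5 * \<epsilon>) powr s" for \<epsilon>
  have A1_int: "integrable lebesgue (A1 \<epsilon>) \<and> 0 \<le> integral\<^sup>L lebesgue (A1 \<epsilon>) \<and> integral\<^sup>L lebesgue (A1 \<epsilon>) \<le> \<beta> \<epsilon>"
    if e: "\<epsilon> > 0" for \<epsilon>
  proof -
    have e5: "5 * \<epsilon> > 0" using e by simp
    note b1 = Cin(2)[rule_format, OF e5, of "\<epsilon> *\<^sub>R ee"]
    note b2 = Cin(2)[rule_format, OF e5, of 0]
    have R1i: "integrable lebesgue (R1 \<epsilon>)" unfolding R1_def using b1 b2
      by (intro integrable_mult_right Bochner_Integration.integrable_add) auto
    have R1v: "integral\<^sup>L lebesgue (R1 \<epsilon>) \<le> \<beta> \<epsilon>"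
    proof -
      have "integral\<^sup>L lebesgue (R1 \<epsilon>) = \<bar>B\<bar> * (c1 * (\<integral>x. indicator (ball (\<epsilon> *\<^sub>R ee) (5 * \<epsilon>)) x * norm (x - \<epsilon> *\<^sub>R ee) powr (s - real CARD('n)) \<partial>lebesgue)
         + KK * (\<integral>x. indicator (ball (0::real^'n) (5 * \<epsilon>)) x * norm (x - 0) powr (s - real CARD('n)) \<partial>lebesgue))"
        unfolding R1_def using b1 b2 by (simp add: Bochner_Integration.integral_add)
      also have "\<dots> \<le> \<bar>B\<bar> * (c1 * (Cin * (5 * \<epsilon>) powr s) + KK * (Cin * (5 * \<epsilon>) powr s))"
        using b1 b2 c1_nonneg KK_pos by (intro mult_left_mono add_mono) auto
      also have "\<dots> = \<beta> \<epsilon>" unfolding \<beta>_def by (simp add: algebra_simps)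
      finally show ?thesis .
    qed
    have bd: "AE x in lebesgue. norm (A1 \<epsilon> x) \<le> R1 \<epsilon> x"
      using qB
    proof eventually_elim
      case (elim x)
      have R1n: "R1 \<epsilon> x \<ge> 0" unfolding R1_def using c1_nonneg KK_pos by (auto simp: indicator_def)
      show ?case
      proof (cases "x \<in> halfsp i1 \<and> norm x \<le> 3 * \<epsilon>")
        case True
        hence x1: "x $ i1 > 0" by (simp add: halfsp_def)
        have qb: "\<bar>q x\<bar> \<le> \<bar>B\<bar>" using elim True by auto
        have "norm (A1 \<epsilon> x) = \<bar>Ge \<epsilon> x - Pcal i1 s x\<bar> * \<bar>q x\<bar>" using True by (simp add: A1_def A_def)
        also have "\<dots> \<le> (c1 * (indicator (ball (\<epsilon> *\<^sub>R ee) (5 * \<epsilon>)) x * norm (x - \<epsilon> *\<^sub>R ee) powr (s - real CARD('n)))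
      + KK * (indicator (ball (0::real^'n) (5 * \<epsilon>)) x * norm (x - 0) powr (s - real CARD('n)))) * \<bar>B\<bar>"
          using regI_pt[OF e x1] True qb by (intro mult_mono) auto
        also have "\<dots> = R1 \<epsilon> x" unfolding R1_def by simp
        finally show ?thesis .
      next
        case False
        hence "A1 \<epsilon> x = 0" by (auto simp: A1_def A_def)
        thus ?thesis using R1n by simp
      qed
    qed
    have i: "integrable lebesgue (A1 \<epsilon>)"
      by (rule Bochner_Integration.integrable_bound[OF R1i A1m]) (use bd in \<open>auto elim: AE_mp\<close>)
    have "integral\<^sup>L lebesgue (A1 \<epsilon>) \<le> integral\<^sup>L lebesgue (R1 \<epsilon>)"
      using bd by (intro integral_mono_AE i R1i) (auto elim: AE_mp)
    moreover have "0 \<le> integral\<^sup>L lebesgue (A1 \<epsilon>)"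
      by (intro integral_nonneg_AE) (auto simp: A1_def A_nonneg)
    ultimately show ?thesis using i R1v by auto
  qed
  have A2_bd: "norm (A2 \<epsilon> x) \<le> c2 * W0 q x" if e: "\<epsilon> > 0" for \<epsilon> x
  proof (cases "x \<in> halfsp i1 \<and> 3 * \<epsilon> < norm x")
    case True
    hence x1: "x $ i1 > 0" by (simp add: halfsp_def)
    have "norm (A2 \<epsilon> x) = \<bar>Ge \<epsilon> x - Pcal i1 s x\<bar> * \<bar>q x\<bar>" using True by (simp add: A2_def A_def)
    also have "\<dots> \<le> c2 * ((x $ i1) powr s * norm x powr (- real CARD('n))) * \<bar>q x\<bar>"
      using regII_pt[OF e x1] True by (intro mult_right_mono) auto
    also have "\<dots> = c2 * W0 q x" using True by (simp add: W0_def)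
    finally show ?thesis .
  next
    case False
    hence "A2 \<epsilon> x = 0" by (auto simp: A2_def A_def)
    thus ?thesis using c2_nonneg W0_nonneg[of q x] by simp
  qed
  have A2_int: "integrable lebesgue (A2 \<epsilon>)" if e: "\<epsilon> > 0" for \<epsilon>
    by (rule Bochner_Integration.integrable_bound[OF integrable_mult_right[OF W, of c2] A2m])
       (use A2_bd[OF e] c2_nonneg W0_nonneg[of q] in auto)
  have A2_lim: "((\<lambda>\<epsilon>. integral\<^sup>L lebesgue (A2 \<epsilon>)) \<longlongrightarrow> 0) (at_right 0)"
  proof -
    have "((\<lambda>\<epsilon>. integral\<^sup>L lebesgue (A2 \<epsilon>)) \<longlongrightarrow> 0) (at_right 0)"
    proof (rule DCT_at_right0[OF A2m integrable_mult_right[OF W, of c2]])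
      show "\<forall>\<^sub>F t in at_right 0. AE x in lebesgue. norm (A2 t x) \<le> c2 * W0 q x"
        using A2_bd by (auto simp: eventually_at_right_field intro!: exI[of _ 1])
      show "AE x in lebesgue. ((\<lambda>t. A2 t x) \<longlongrightarrow> 0) (at_right 0)"
      proof (intro AE_I2)
        fix x
        show "((\<lambda>t. A2 t x) \<longlongrightarrow> 0) (at_right 0)"
        proof (cases "x \<in> halfsp i1")
          case False thus ?thesis by (simp add: A2_def A_def)
        next
          case True
          hence x1: "x $ i1 > 0" by (simp add: halfsp_def)
          have x0: "norm x > 0" using x1 x1_le[of x] by linarith
          have ev: "\<forall>\<^sub>F t in at_right 0. A2 t x = \<bar>Ge t x - Pcal i1 s x\<bar> * \<bar>q x\<bar>"
          proof -
            have "\<forall>\<^sub>F t in at_right 0. t < norm x / 3" using x0 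
              by (auto simp: eventually_at_right_field intro!: exI[of _ "norm x / 3"])
            thus ?thesis by eventually_elim (use True in \<open>simp add: A2_def A_def\<close>)
          qed
          have "((\<lambda>t. \<bar>Ge t x - Pcal i1 s x\<bar> * \<bar>q x\<bar>) \<longlongrightarrow> \<bar>Pcal i1 s x - Pcal i1 s x\<bar> * \<bar>q x\<bar>) (at_right 0)"
            by (intro tendsto_mult tendsto_rabs tendsto_diff Ge_pw[OF x1] tendsto_const)
          hence "((\<lambda>t. \<bar>Ge t x - Pcal i1 s x\<bar> * \<bar>q x\<bar>) \<longlongrightarrow> 0) (at_right 0)" by simp
          thus ?thesis using tendsto_cong[OF ev] by simp
        qed
      qed
    qed
    thus ?thesis .
  qed
  have A1_lim: "((\<lambda>\<epsilon>. integral\<^sup>L lebesgue (A1 \<epsilon>)) \<longlongrightarrow> 0) (at_right 0)"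
  proof (rule tendsto_sandwich[of "\<lambda>_. 0" _ _ \<beta>])
    show "\<forall>\<^sub>F \<epsilon> in at_right 0. 0 \<le> integral\<^sup>L lebesgue (A1 \<epsilon>)"
      using A1_int by (auto simp: eventually_at_right_field intro!: exI[of _ 1])
    show "\<forall>\<^sub>F \<epsilon> in at_right 0. integral\<^sup>L lebesgue (A1 \<epsilon>) \<le> \<beta> \<epsilon>"
      using A1_int by (auto simp: eventually_at_right_field intro!: exI[of _ 1])
    show "((\<lambda>\<epsilon>. \<beta> \<epsilon>) \<longlongrightarrow> 0) (at_right 0)"
      unfolding \<beta>_def using tendsto_mult_left[OF powr_lim0, of "\<bar>B\<bar> * (c1 * Cin + KK * Cin)"] by simp
  qed simp
  show "((\<lambda>\<epsilon>. \<integral>x. indicator (halfsp i1) x * (\<bar>Ge \<epsilon> x - Pcal i1 s x\<bar> * \<bar>q x\<bar>) \<partial>lebesgue) \<longlongrightarrow> 0) (at_right 0)"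
  proof -
    have "\<forall>\<^sub>F \<epsilon> in at_right 0. integral\<^sup>L lebesgue (A1 \<epsilon>) + integral\<^sup>L lebesgue (A2 \<epsilon>) = 
        (\<integral>x. indicator (halfsp i1) x * (\<bar>Ge \<epsilon> x - Pcal i1 s x\<bar> * \<bar>q x\<bar>) \<partial>lebesgue)"
    proof -
      have "\<forall>\<^sub>F \<epsilon> in at_right 0. (\<epsilon>::real) > 0" by (simp add: eventually_at_right_field) (auto intro: exI[of _ 1])
      thus ?thesis
      proof eventually_elim
        case (elim \<epsilon>)
        have "integral\<^sup>L lebesgue (A1 \<epsilon>) + integral\<^sup>L lebesgue (A2 \<epsilon>) = (\<integral>x. A1 \<epsilon> x + A2 \<epsilon> x \<partial>lebesgue)"
          using A1_int[OF elim] A2_int[OF elim] by (simp add: Bochner_Integration.integral_add)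
        also have "\<dots> = (\<integral>x. A \<epsilon> x \<partial>lebesgue)" by (simp add: Asplit)
        finally show ?case by (simp add: A_def)
      qed
    qed
    from tendsto_cong[OF this] tendsto_add[OF A1_lim A2_lim] show ?thesis by simp
  qed
  show "\<forall>\<^sub>F \<epsilon> in at_right 0. integrable lebesgue (\<lambda>x. indicator (halfsp i1) x * ((Ge \<epsilon> x - Pcal i1 s x) * q x))"
  proof -
    have "\<forall>\<^sub>F \<epsilon> in at_right 0. (\<epsilon>::real) > 0" by (simp add: eventually_at_right_field) (auto intro: exI[of _ 1])
    thus ?thesis
    proof eventually_elim
      case (elim \<epsilon>)
      have Ai: "integrable lebesgue (A \<epsilon>)"
        using Bochner_Integration.integrable_add[OF conjunct1[OF A1_int[OF elim]] A2_int[OF elim]] by (simp add: Asplit[abs_def])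
      show ?case
      proof (rule Bochner_Integration.integrable_bound[OF Ai])
        show "(\<lambda>x. indicator (halfsp i1) x * ((Ge \<epsilon> x - Pcal i1 s x) * q x)) \<in> borel_measurable lebesgue"
          by (intro borel_measurable_times borel_measurable_indicator H_sets borel_measurable_diff Gm Pm qm)
        show "AE x in lebesgue. norm (indicator (halfsp i1) x * ((Ge \<epsilon> x - Pcal i1 s x) * q x)) \<le> norm (A \<epsilon> x)"
          by (intro AE_I2) (simp add: A_def abs_mult)
      qed
    qed
  qed
qed

end

context GS begin

lemma unif:
  assumes K: "compact K" "K \<subseteq> halfsp i1"
  shows "uniform_limit K Ge (Pcal i1 s) (at_right 0)"
proof -
  have "0 \<notin> K" using K(2) by (auto simp: halfsp_def)
  then obtain \<delta> where \<delta>: "\<delta> > 0" "\<And>x. x \<in> K \<Longrightarrow> \<delta> \<le> norm x"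
    using separate_point_closed[OF compact_imp_closed[OF K(1)], of 0] by (auto simp: dist_norm)
  obtain M where M: "M > 0" "\<And>x. x \<in> K \<Longrightarrow> norm x \<le> M"
    using compact_imp_bounded[OF K(1)] by (auto simp: bounded_pos)
  define S where "S = {-\<delta>/2..\<delta>/2} \<times> K"
  define f where "f p = norm (snd p + fst p *\<^sub>R ee) powr (- real CARD('n))" for p :: "real \<times> (real^'n)"
  have Sc: "compact S" unfolding S_def using K(1) by (intro compact_Times) auto
  have fpos: "norm (snd p + fst p *\<^sub>R ee) \<ge> \<delta>/2" if pS: "p \<in> S" for p
  proof -
    obtain t x where p: "p = (t, x)" "t \<in> {-\<delta>/2..\<delta>/2}" "x \<in> K"
      using pS unfolding S_def by blast
    have pt: "\<bar>t\<bar> \<le> \<delta>/2" using p(2) by auto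
    have "norm x - norm (t *\<^sub>R ee) \<le> norm (x + t *\<^sub>R ee)"
      using norm_triangle_ineq2[of x "- (t *\<^sub>R ee)"] by simp
    thus ?thesis using p pt \<delta>(2)[of x] by simp
  qed
  have fc: "continuous_on S f" unfolding f_def
    by (intro continuous_intros) (use fpos \<delta>(1) in fastforce)+
  have uc: "uniformly_continuous_on S f" by (rule compact_uniformly_continuous[OF fc Sc])
  show ?thesis
  unfolding uniform_limit_iff
  proof (intro allI impI)
    fix \<eta> :: real assume \<eta>: "\<eta> > 0"
    define \<eta>' where "\<eta>' = \<eta> / (KK * M powr s + 1)"
    have KM: "KK * M powr s \<ge> 0" using KK_pos by simp
    have \<eta>': "\<eta>' > 0" unfolding \<eta>'_def using \<eta> KM by simp
    obtain \<rho> where \<rho>: "\<rho> > 0" "\<And>a b. a \<in> S \<Longrightarrow> b \<in> S \<Longrightarrow> dist b a < \<rho> \<Longrightarrow> dist (f b) (f a) < \<eta>'"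
      using uc \<eta>' unfolding uniformly_continuous_on_def by metis
    have "\<forall>\<^sub>F \<epsilon> in at_right 0. 0 < \<epsilon> \<and> \<epsilon> < min \<rho> (\<delta>/2)"
      using \<rho>(1) \<delta>(1) by (auto simp: eventually_at_right_field intro!: exI[of _ "min \<rho> (\<delta>/2)"])
    thus "\<forall>\<^sub>F \<epsilon> in at_right 0. \<forall>x\<in>K. dist (Ge \<epsilon> x) (Pcal i1 s x) < \<eta>"
    proof eventually_elim
      case (elim \<epsilon>)
      show ?case
      proof
        fix x assume x: "x \<in> K"
        have x1: "x $ i1 > 0" using x K(2) by (auto simp: halfsp_def)
        have S0: "(0, x) \<in> S" "(\<epsilon>, x) \<in> S" "(-\<epsilon>, x) \<in> S" using x elim \<delta>(1) by (auto simp: S_def)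
        have d1: "dist (f (\<epsilon>, x)) (f (0, x)) < \<eta>'" using \<rho>(2)[OF S0(1) S0(2)] elim by (simp add: dist_Pair_Pair)
        have d2: "dist (f (-\<epsilon>, x)) (f (0, x)) < \<eta>'" using \<rho>(2)[OF S0(1) S0(3)] elim by (simp add: dist_Pair_Pair)
        have ne: "x \<noteq> \<epsilon> *\<^sub>R ee" using \<delta>(2)[OF x] elim by auto
        have L: "KK * (x $ i1) powr s * f (\<epsilon>, x) \<le> Ge \<epsilon> x"
          using Ge_lower[OF _ x1 ne] elim by (simp add: f_def)
        have U: "Ge \<epsilon> x \<le> KK * (x $ i1) powr s * f (-\<epsilon>, x)"
          using Ge_upper[OF _ x1] elim by (simp add: f_def)
        have P: "Pcal i1 s x = KK * (x $ i1) powr s * f (0, x)" by (simp add: f_def Pcal_eq)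
        have xs: "(x $ i1) powr s \<le> M powr s"
          using x1 x1_le[of x] M(2)[OF x] s0 by (intro powr_mono2) auto
        have "\<bar>Ge \<epsilon> x - Pcal i1 s x\<bar> \<le> KK * (x $ i1) powr s * \<eta>'"
        proof -
          have a: "KK * (x $ i1) powr s * f (-\<epsilon>, x) - KK * (x $ i1) powr s * f (0, x) \<le> KK * (x $ i1) powr s * \<eta>'"
            using d2 KK_pos unfolding dist_real_def right_diff_distrib[symmetric] mult.assoc[symmetric]
            by (intro mult_left_mono) auto
          have b: "KK * (x $ i1) powr s * f (0, x) - KK * (x $ i1) powr s * f (\<epsilon>, x) \<le> KK * (x $ i1) powr s * \<eta>'"
            using d1 KK_pos unfolding dist_real_def right_diff_distrib[symmetric] mult.assoc[symmetric]
            by (intro mult_left_mono) auto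
          show ?thesis using L U P a b by linarith
        qed
        also have "\<dots> \<le> KK * M powr s * \<eta>'" using xs KK_pos \<eta>' by (intro mult_right_mono mult_left_mono) auto
        also have "\<dots> < \<eta>" unfolding \<eta>'_def using \<eta> KM by (simp add: field_simps)
        finally show "dist (Ge \<epsilon> x) (Pcal i1 s x) < \<eta>" by (simp add: dist_real_def)
      qed
    qed
  qed
qed

end

lemma fle_meas:
  fixes \<phi> :: "real^'n::finite \<Rightarrow> real"
  assumes c: "continuous_on UNIV \<phi>"
  shows "(\<lambda>x. frac_lap_eps s \<epsilon> \<phi> x) \<in> borel_measurable lebesgue"
proof -
  define A where "A = ball (0::real^'n) (1 / \<epsilon>) - ball 0 \<epsilon>"
  define c0 where "c0 = real CARD('n) + 2 * s"
  define F where "F x z = indicator A z *\<^sub>R ((\<phi> x - \<phi> (x + z)) / norm z powr c0)" for x z :: "real^'n"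
  have Ab: "A \<in> sets borel" unfolding A_def by simp
  have g1: "(\<lambda>p::(real^'n)\<times>(real^'n). \<phi> (fst p) - \<phi> (fst p + snd p)) \<in> borel_measurable borel"
    by (intro borel_measurable_continuous_onI continuous_intros continuous_on_compose2[OF c]) auto
  have g2: "(\<lambda>p::(real^'n)\<times>(real^'n). norm (snd p) powr c0) \<in> borel_measurable borel"
    by (intro powr_real_measurable borel_measurable_continuous_onI continuous_intros)
  have g3: "(\<lambda>p::(real^'n)\<times>(real^'n). indicator A (snd p) :: real) \<in> borel_measurable borel"
    by (intro measurable_compose[OF _ borel_measurable_indicator[OF Ab]] borel_measurable_continuous_onI continuous_intros)
  have Fm: "case_prod F \<in> borel_measurable borel"
  proof -
    have "case_prod F = (\<lambda>p. indicator A (snd p) * ((\<phi> (fst p) - \<phi> (fst p + snd p)) / norm (snd p) powr c0))"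
      by (auto simp: F_def fun_eq_iff)
    thus ?thesis using g1 g2 g3 by (simp add: borel_measurable_times borel_measurable_divide)
  qed
  have Fm2: "case_prod F \<in> borel_measurable (lborel \<Otimes>\<^sub>M lborel)"
    using Fm by (simp add: lborel_prod measurable_lborel1)
  have Im: "(\<lambda>x. \<integral>z. F x z \<partial>lborel) \<in> borel_measurable lborel"
    by (rule lborel.borel_measurable_lebesgue_integral[OF Fm2])
  have Fx: "F x \<in> borel_measurable lborel" for x
  proof -
    have pm: "(\<lambda>z::real^'n. (x, z)) \<in> borel_measurable borel"
      by (intro borel_measurable_continuous_onI continuous_intros)
    have "(\<lambda>z. case_prod F (x, z)) \<in> borel_measurable borel" by (rule measurable_compose[OF pm Fm])
    thus ?thesis by (simp add: measurable_lborel1)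
  qed
  have eq: "frac_lap_eps s \<epsilon> \<phi> x = cNs CARD('n) s * (\<integral>z. F x z \<partial>lborel)" for x
    unfolding frac_lap_eps_def set_lebesgue_integral_def F_def[symmetric] A_def[symmetric] c0_def[symmetric]
    using integral_completion[OF Fx[of x]] by simp
  show ?thesis unfolding eq
    by (intro borel_measurable_times borel_measurable_const measurable_completion) (use Im in auto)
qed

context GS begin

definition "wt (x::real^'n) = 1 / (1 + norm x powr (real CARD('n) + 2 * s))"

lemma wt_pos: "wt x > 0" unfolding wt_def by (simp add: add_pos_nonneg)
lemma wt_le1: "wt x \<le> 1"
proof -
  have "1 \<le> 1 + norm x powr (real CARD('n) + 2 * s)" by simp
  moreover have "0 < 1 + norm x powr (real CARD('n) + 2 * s)" by (simp add: add_pos_nonneg)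
  ultimately show ?thesis unfolding wt_def by (simp add: divide_le_eq_1)
qed

lemma wt_meas: "wt \<in> borel_measurable lebesgue"
proof -
  have n: "(\<lambda>x::real^'n. norm x) \<in> borel_measurable borel"
    by (intro borel_measurable_continuous_onI continuous_on_norm_id)
  have "wt \<in> borel_measurable borel" unfolding wt_def[abs_def]
    by (intro borel_measurable_divide borel_measurable_add borel_measurable_const powr_real_measurable n)
  thus ?thesis by (rule bl)
qed

lemma wt_tail: "integrable lebesgue (\<lambda>x. indicator (halfsp i1 \<inter> {x. 1 < norm x}) x * ((x $ i1) powr s * norm x powr (- real CARD('n)) * \<bar>wt x\<bar>))"
proof -
  obtain Ct where Ct: "Ct \<ge> 0" "\<forall>R>0. \<forall>c::real^'n. integrable lebesgue (\<lambda>x. indicator {x. R < norm (x - c)} x * norm (x - c) powr (- (DIM(real^'n) + s)))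
     \<and> (\<integral>x. indicator {x. R < norm (x - c)} x * norm (x - c) powr (- (DIM(real^'n) + s)) \<partial>lebesgue) \<le> Ct * R powr (-s)"
    using tail_L[OF s0] by blast
  have i: "integrable lebesgue (\<lambda>x. indicator {x. 1 < norm (x - (0::real^'n))} x * norm (x - 0) powr (- (DIM(real^'n) + s)))"
    using Ct(2)[rule_format, of 1 0] by simp
  show ?thesis
  proof (rule Bochner_Integration.integrable_bound[OF i])
    have s1: "halfsp i1 \<inter> {x. 1 < norm x} \<in> sets lebesgue"
    proof -
      have "{x::real^'n. 1 < norm x} \<in> sets borel" by (intro borel_open open_Collect_less continuous_intros)
      hence "{x::real^'n. 1 < norm x} \<in> sets lebesgue" by simp
      thus ?thesis using H_sets by (intro sets.Int)
    qed
    show "(\<lambda>x. indicator (halfsp i1 \<inter> {x. 1 < norm x}) x * ((x $ i1) powr s * norm x powr (- real CARD('n)) * \<bar>wt x\<bar>)) \<in> borel_measurable lebesgue"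
      by (rule borel_measurable_times[OF borel_measurable_indicator[OF s1] borel_measurable_times[OF bl[OF g_meas] borel_measurable_abs[OF wt_meas]]])
    show "AE x in lebesgue. norm (indicator (halfsp i1 \<inter> {x. 1 < norm x}) x * ((x $ i1) powr s * norm x powr (- real CARD('n)) * \<bar>wt x\<bar>))
        \<le> norm (indicator {x. 1 < norm (x - (0::real^'n))} x * norm (x - 0) powr (- (DIM(real^'n) + s)))"
    proof (intro AE_I2)
      fix x :: "real^'n"
      show "norm (indicator (halfsp i1 \<inter> {x. 1 < norm x}) x * ((x $ i1) powr s * norm x powr (- real CARD('n)) * \<bar>wt x\<bar>))
        \<le> norm (indicator {x. 1 < norm (x - (0::real^'n))} x * norm (x - 0) powr (- (DIM(real^'n) + s)))"
      proof (cases "x \<in> halfsp i1 \<and> 1 < norm x")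
        case False thus ?thesis by (auto simp: indicator_def)
      next
        case True
        hence x1: "x $ i1 > 0" and xn: "1 < norm x" by (auto simp: halfsp_def)
        have a: "(x $ i1) powr s * norm x powr (- real CARD('n)) \<le> norm x powr (s - real CARD('n))"
        proof -
          have "(x $ i1) powr s \<le> norm x powr s" using x1 x1_le[of x] s0 by (intro powr_mono2) auto
          hence "(x $ i1) powr s * norm x powr (- real CARD('n)) \<le> norm x powr s * norm x powr (- real CARD('n))"
            by (intro mult_right_mono) auto
          thus ?thesis using xn by (simp add: powr_add[symmetric])
        qed
        have b: "wt x \<le> norm x powr (- 2 * s)"
        proof -
          have "norm x powr (2 * s) \<le> norm x powr (real CARD('n) + 2 * s)" using xn by (intro powr_mono) auto
          hence q1: "norm x powr (2 * s) \<le> 1 + norm x powr (real CARD('n) + 2 * s)" by linarith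
          have "x \<noteq> 0" using xn by auto
          hence q2: "0 < norm x powr (2 * s)" by simp
          have q3: "0 < 1 + norm x powr (real CARD('n) + 2 * s)" by (simp add: add_pos_nonneg)
          have "wt x \<le> 1 / norm x powr (2 * s)" unfolding wt_def
            by (rule divide_left_mono) (use q1 q2 q3 in auto)
          thus ?thesis using xn by (simp add: powr_minus_divide)
        qed
        have "(x $ i1) powr s * norm x powr (- real CARD('n)) * \<bar>wt x\<bar> \<le> norm x powr (s - real CARD('n)) * norm x powr (- 2 * s)"
          using a b wt_pos[of x] by (intro mult_mono) auto
        also have "\<dots> = norm x powr (- (real CARD('n) + s))" using xn by (simp add: powr_add[symmetric] algebra_simps)
        finally show ?thesis using True wt_pos[of x] by (simp add: indicator_def)
      qed
    qed
  qed
qed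

lemma weight_part:
  shows "(\<forall>\<^sub>F \<epsilon> in at_right 0. set_integrable lebesgue (halfsp i1)
            (\<lambda>x. \<bar>\<epsilon> powr (-s) * Ginf i1 s x (\<epsilon> *\<^sub>R axis i1 1) - Pcal i1 s x\<bar>
                 / (1 + norm x powr (real CARD('n) + 2 * s))))
    \<and> ((\<lambda>\<epsilon>. LINT x:halfsp i1|lebesgue.
            \<bar>\<epsilon> powr (-s) * Ginf i1 s x (\<epsilon> *\<^sub>R axis i1 1) - Pcal i1 s x\<bar>
                 / (1 + norm x powr (real CARD('n) + 2 * s))) \<longlongrightarrow> 0) (at_right 0)"
proof -
  have qB: "AE x in lebesgue. x \<in> halfsp i1 \<longrightarrow> \<bar>wt x\<bar> \<le> 1"
    by (intro AE_I2 impI) (simp add: abs_of_pos[OF wt_pos] wt_le1)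
  note C = core[OF wt_meas qB wt_tail]
  have feq: "indicator (halfsp i1) x *\<^sub>R (\<bar>\<epsilon> powr (-s) * Ginf i1 s x (\<epsilon> *\<^sub>R axis i1 1) - Pcal i1 s x\<bar>
                 / (1 + norm x powr (real CARD('n) + 2 * s)))
     = indicator (halfsp i1) x * (\<bar>Ge \<epsilon> x - Pcal i1 s x\<bar> * \<bar>wt x\<bar>)" for \<epsilon> x
    using wt_pos[of x] by (simp add: Ge_def wt_def)
  have feq2: "\<bar>indicator (halfsp i1) x * ((Ge \<epsilon> x - Pcal i1 s x) * wt x)\<bar>
     = indicator (halfsp i1) x * (\<bar>Ge \<epsilon> x - Pcal i1 s x\<bar> * \<bar>wt x\<bar>)" for \<epsilon> x
    by (simp add: abs_mult indicator_def)
  show ?thesis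
  proof
    show "\<forall>\<^sub>F \<epsilon> in at_right 0. set_integrable lebesgue (halfsp i1)
            (\<lambda>x. \<bar>\<epsilon> powr (-s) * Ginf i1 s x (\<epsilon> *\<^sub>R axis i1 1) - Pcal i1 s x\<bar>
                 / (1 + norm x powr (real CARD('n) + 2 * s)))"
      using C(2)
    proof eventually_elim
      case (elim \<epsilon>)
      from integrable_abs[OF elim] show ?case unfolding set_integrable_def feq feq2 .
    qed
    show "((\<lambda>\<epsilon>. LINT x:halfsp i1|lebesgue.
            \<bar>\<epsilon> powr (-s) * Ginf i1 s x (\<epsilon> *\<^sub>R axis i1 1) - Pcal i1 s x\<bar>
                 / (1 + norm x powr (real CARD('n) + 2 * s))) \<longlongrightarrow> 0) (at_right 0)"
      using C(3) unfolding set_lebesgue_integral_def feq .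
  qed
qed

lemma unif_part:
  "\<forall>K. compact K \<and> K \<subseteq> halfsp i1 \<longrightarrow>
          uniform_limit K (\<lambda>\<epsilon> x. \<epsilon> powr (-s) * Ginf i1 s x (\<epsilon> *\<^sub>R axis i1 1)) (Pcal i1 s) (at_right 0)"
  using unif unfolding Ge_def[abs_def] by blast

end

context GS begin

lemma xs_part:
  assumes \<phi>: "\<phi> \<in> Xs i1 s"
  shows "((\<lambda>\<epsilon>. LINT x:halfsp i1|lebesgue.
               \<epsilon> powr (-s) * Ginf i1 s x (\<epsilon> *\<^sub>R axis i1 1) * frac_lap s \<phi> x)
           \<longlongrightarrow> (LINT x:halfsp i1|lebesgue. Pcal i1 s x * frac_lap s \<phi> x)) (at_right 0)"
proof -
  define h where "h = frac_lap s \<phi>"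
  define u where "u \<epsilon> = frac_lap_eps s \<epsilon> \<phi>" for \<epsilon>
  from \<phi> obtain C \<psi> \<epsilon>0 where
    c\<phi>: "continuous_on UNIV \<phi>" and
    hC: "AE x in lebesgue. x \<in> halfsp i1 \<longrightarrow> ((\<lambda>\<epsilon>. u \<epsilon> x) \<longlongrightarrow> h x) (at_right 0) \<and> \<bar>h x\<bar> \<le> C" and
    \<psi>m: "\<psi> \<in> borel_measurable lebesgue" and
    \<psi>i: "set_integrable lebesgue (halfsp i1) (\<lambda>x. (x $ i1) powr s * \<psi> x)" and
    \<epsilon>0: "\<epsilon>0 > 0" and
    u\<psi>: "\<And>\<epsilon>. \<epsilon> \<in> {0<..\<epsilon>0} \<Longrightarrow> AE x in lebesgue. x \<in> halfsp i1 \<longrightarrow> \<bar>u \<epsilon> x\<bar> \<le> \<psi> x"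
    unfolding Xs_def h_def u_def by blast
  define e where "e n = \<epsilon>0 * inverse (real (Suc n))" for n
  have e_pos: "e n \<in> {0<..\<epsilon>0}" for n using \<epsilon>0 by (auto simp: e_def field_simps)
  have e_lim: "filterlim e (at_right 0) sequentially"
  proof -
    have "e \<longlonglongrightarrow> \<epsilon>0 * 0" unfolding e_def by (intro tendsto_mult tendsto_const LIMSEQ_inverse_real_of_nat)
    moreover have "\<forall>n. e n \<in> {0<..} \<and> e n \<noteq> 0"
    proof
      fix n show "e n \<in> {0<..} \<and> e n \<noteq> 0" using e_pos[of n] by auto
    qed
    ultimately show ?thesis unfolding filterlim_at by (auto intro!: always_eventually)
  qed
  have um: "u (e n) \<in> borel_measurable lebesgue" for n unfolding u_def by (rule fle_meas[OF c\<phi>])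
  define g where "g x = lim (\<lambda>n. u (e n) x)" for x
  have gm: "g \<in> borel_measurable lebesgue" unfolding g_def by (rule borel_measurable_lim_metric[OF um])
  have AEall: "AE x in lebesgue. \<forall>n. x \<in> halfsp i1 \<longrightarrow> \<bar>u (e n) x\<bar> \<le> \<psi> x"
    by (subst AE_all_countable) (use u\<psi>[OF e_pos] in blast)
  have key: "AE x in lebesgue. x \<in> halfsp i1 \<longrightarrow> g x = h x \<and> \<bar>h x\<bar> \<le> C \<and> \<bar>h x\<bar> \<le> \<psi> x"
    using hC AEall
  proof eventually_elim
    case (elim x)
    show ?case
    proof
      assume xH: "x \<in> halfsp i1"
      have l: "(\<lambda>n. u (e n) x) \<longlonglongrightarrow> h x" using elim xH filterlim_compose[OF _ e_lim] by blast
      have "\<bar>h x\<bar> \<le> \<psi> x"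
      proof (rule tendsto_upperbound[OF tendsto_rabs[OF l]])
        show "\<forall>\<^sub>F n in sequentially. \<bar>u (e n) x\<bar> \<le> \<psi> x" using elim xH by auto
      qed simp
      thus "g x = h x \<and> \<bar>h x\<bar> \<le> C \<and> \<bar>h x\<bar> \<le> \<psi> x" using limI[OF l] elim xH by (simp add: g_def)
    qed
  qed
  define q where "q x = indicator (halfsp i1) x * h x" for x
  have qm: "q \<in> borel_measurable lebesgue"
  proof (rule borel_measurable_AE)
    show "(\<lambda>x. indicator (halfsp i1) x * g x) \<in> borel_measurable lebesgue"
      by (intro borel_measurable_times borel_measurable_indicator H_sets gm)
    show "AE x in lebesgue. indicator (halfsp i1) x * g x = q x"
      using key by eventually_elim (auto simp: q_def indicator_def)
  qed
  have qB: "AE x in lebesgue. x \<in> halfsp i1 \<longrightarrow> \<bar>q x\<bar> \<le> C"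
    using key by eventually_elim (auto simp: q_def)
  have qT: "integrable lebesgue (\<lambda>x. indicator (halfsp i1 \<inter> {x. 1 < norm x}) x * ((x $ i1) powr s * norm x powr (- real CARD('n)) * \<bar>q x\<bar>))"
  proof (rule Bochner_Integration.integrable_bound[OF \<psi>i[unfolded set_integrable_def]])
    have s1: "halfsp i1 \<inter> {x. 1 < norm x} \<in> sets lebesgue"
    proof -
      have "{x::real^'n. 1 < norm x} \<in> sets borel" by (intro borel_open open_Collect_less continuous_intros)
      hence "{x::real^'n. 1 < norm x} \<in> sets lebesgue" by simp
      thus ?thesis using H_sets by (intro sets.Int)
    qed
    show "(\<lambda>x. indicator (halfsp i1 \<inter> {x. 1 < norm x}) x * ((x $ i1) powr s * norm x powr (- real CARD('n)) * \<bar>q x\<bar>)) \<in> borel_measurable lebesgue"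
      by (rule borel_measurable_times[OF borel_measurable_indicator[OF s1] borel_measurable_times[OF bl[OF g_meas] borel_measurable_abs[OF qm]]])
    show "AE x in lebesgue. norm (indicator (halfsp i1 \<inter> {x. 1 < norm x}) x * ((x $ i1) powr s * norm x powr (- real CARD('n)) * \<bar>q x\<bar>))
       \<le> norm (indicator (halfsp i1) x *\<^sub>R ((x $ i1) powr s * \<psi> x))"
      using key
    proof eventually_elim
      case (elim x)
      show ?case
      proof (cases "x \<in> halfsp i1 \<and> 1 < norm x")
        case False thus ?thesis by (auto simp: indicator_def)
      next
        case True
        hence xH: "x \<in> halfsp i1" and xn: "1 < norm x" by auto
        have hb: "\<bar>h x\<bar> \<le> \<psi> x" using elim xH by auto
        have n1: "norm x powr (- real CARD('n)) \<le> 1"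
        proof -
          have "1 \<le> norm x powr (real CARD('n))" using xn by (intro ge_one_powr_ge_zero) auto
          hence "1 / norm x powr (real CARD('n)) \<le> 1" by (simp add: divide_le_eq_1)
          thus ?thesis using xn by (simp add: powr_minus_divide)
        qed
        have "(x $ i1) powr s * norm x powr (- real CARD('n)) * \<bar>q x\<bar> \<le> (x $ i1) powr s * 1 * \<psi> x"
          using n1 hb xH by (intro mult_mono) (auto simp: q_def)
        thus ?thesis using True by (auto simp: indicator_def)
      qed
    qed
  qed
  note Cr = core[OF qm qB qT]
  define T where "T \<epsilon> = (LINT x:halfsp i1|lebesgue. \<epsilon> powr (-s) * Ginf i1 s x (\<epsilon> *\<^sub>R axis i1 1) * frac_lap s \<phi> x)" for \<epsilon>
  define L where "L = (LINT x:halfsp i1|lebesgue. Pcal i1 s x * frac_lap s \<phi> x)"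
  have Teq: "T \<epsilon> = (\<integral>x. indicator (halfsp i1) x * (Ge \<epsilon> x * q x) \<partial>lebesgue)" for \<epsilon>
    unfolding T_def set_lebesgue_integral_def
    by (intro Bochner_Integration.integral_cong refl) (simp add: Ge_def q_def h_def indicator_def)
  have Leq: "L = (\<integral>x. indicator (halfsp i1) x * (Pcal i1 s x * q x) \<partial>lebesgue)"
    unfolding L_def set_lebesgue_integral_def
    by (intro Bochner_Integration.integral_cong refl) (simp add: q_def h_def indicator_def)
  have "((\<lambda>\<epsilon>. T \<epsilon> - L) \<longlongrightarrow> 0) (at_right 0)"
  proof (rule Lim_null_comparison[OF _ Cr(3)])
    show "\<forall>\<^sub>F \<epsilon> in at_right 0. norm (T \<epsilon> - L) \<le> (\<integral>x. indicator (halfsp i1) x * (\<bar>Ge \<epsilon> x - Pcal i1 s x\<bar> * \<bar>q x\<bar>) \<partial>lebesgue)"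
      using Cr(2)
    proof eventually_elim
      case (elim \<epsilon>)
      have eq: "(\<lambda>x. indicator (halfsp i1) x * (Ge \<epsilon> x * q x)) = 
          (\<lambda>x. indicator (halfsp i1) x * ((Ge \<epsilon> x - Pcal i1 s x) * q x) + indicator (halfsp i1) x * (Pcal i1 s x * q x))"
        by (simp add: fun_eq_iff algebra_simps)
      have "T \<epsilon> - L = (\<integral>x. indicator (halfsp i1) x * ((Ge \<epsilon> x - Pcal i1 s x) * q x) \<partial>lebesgue)"
        unfolding Teq Leq eq using elim Cr(1) by (simp add: Bochner_Integration.integral_add)
      also have "norm \<dots> \<le> (\<integral>x. norm (indicator (halfsp i1) x * ((Ge \<epsilon> x - Pcal i1 s x) * q x)) \<partial>lebesgue)"
        by (rule integral_norm_bound)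
      also have "\<dots> = (\<integral>x. indicator (halfsp i1) x * (\<bar>Ge \<epsilon> x - Pcal i1 s x\<bar> * \<bar>q x\<bar>) \<partial>lebesgue)"
        by (intro Bochner_Integration.integral_cong refl) (simp add: abs_mult indicator_def)
      finally show ?case .
    qed
  qed
  hence "(T \<longlongrightarrow> L) (at_right 0)" by (rule LIM_zero_cancel)
  thus ?thesis unfolding T_def[abs_def] L_def .
qed

end

theorem lemma3p1:
  fixes i1 :: "'n::finite" and s :: real
  assumes "0 < s" "s < 1" "real CARD('n) \<ge> 2 * s"
  shows "(\<forall>\<^sub>F \<epsilon> in at_right 0. set_integrable lebesgue (halfsp i1)
            (\<lambda>x. \<bar>\<epsilon> powr (-s) * Ginf i1 s x (\<epsilon> *\<^sub>R axis i1 1) - Pcal i1 s x\<bar>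
                 / (1 + norm x powr (real CARD('n) + 2 * s))))
    \<and> ((\<lambda>\<epsilon>. LINT x:halfsp i1|lebesgue.
            \<bar>\<epsilon> powr (-s) * Ginf i1 s x (\<epsilon> *\<^sub>R axis i1 1) - Pcal i1 s x\<bar>
                 / (1 + norm x powr (real CARD('n) + 2 * s))) \<longlongrightarrow> 0) (at_right 0)
    \<and> (\<forall>K. compact K \<and> K \<subseteq> halfsp i1 \<longrightarrow>
          uniform_limit K (\<lambda>\<epsilon> x. \<epsilon> powr (-s) * Ginf i1 s x (\<epsilon> *\<^sub>R axis i1 1))
            (Pcal i1 s) (at_right 0))
    \<and> (\<forall>\<phi>\<in>Xs i1 s.
          ((\<lambda>\<epsilon>. LINT x:halfsp i1|lebesgue.
               \<epsilon> powr (-s) * Ginf i1 s x (\<epsilon> *\<^sub>R axis i1 1) * frac_lap s \<phi> x)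
           \<longlongrightarrow> (LINT x:halfsp i1|lebesgue. Pcal i1 s x * frac_lap s \<phi> x)) (at_right 0))"
proof -
  interpret GS i1 s using assms by unfold_locales auto
  show ?thesis using weight_part unif_part xs_part by blast
qed

end
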